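(* Let $R,S$ be rings and $M$ an $(S,R)$-bimodule. If $M$ is a generator of ${}_S\mathcal{M}$ and the canonical map $\chi:R\to{}_S\mathrm{End}(M)$ is an epimorphism in the category of rings, then the coinduction functor $G={}_S\mathrm{Hom}(M,\bullet):{}_S\mathcal{M}\to{}_R\mathcal{M}$ is fully faithful, that is, all counit maps $\varepsilon_Q:M\otimes_R{}_S\mathrm{Hom}(M,Q)\to Q$, $\varepsilon_Q(m\otimes_R f)=(m)f$, are isomorphisms.
   Context: Left $S$-linear maps are written on the right: $(m)f$; ${}_S\mathrm{End}(M)$ is a ring with $(m)(fg)=((m)f)g$, and $\chi(r)$ is the endomorphism $m\mapsto mr$. For $Q\in{}_S\mathcal{M}$, ${}_S\mathrm{Hom}(M,Q)$ is a left $R$-module via $(m)(r\cdot f)=(mr)f$. $G$ is right adjoint to $M\otimes_R\bullet:{}_R\mathcal{M}\to{}_S\mathcal{M}$ with counit $\varepsilon$ as given. *)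

theory Defs
  imports "HOL-Algebra.Algebra" "HOL-Algebra.Free_Abelian_Groups"
begin

text \<open>Left modules over a (not necessarily commutative) ring, using the record
  type of HOL-Algebra modules (only carrier, add, zero and smult are used).\<close>

definition left_module :: "('s, 'c) ring_scheme \<Rightarrow> ('s, 'm) module \<Rightarrow> bool" where
  "left_module S M \<longleftrightarrow> ring S \<and> abelian_group M \<and> module_axioms S M"

definition right_action_axioms ::
    "('r, 'c) ring_scheme \<Rightarrow> ('s, 'm) module \<Rightarrow> ('m \<Rightarrow> 'r \<Rightarrow> 'm) \<Rightarrow> bool" where
  "right_action_axioms R M ract \<longleftrightarrow>
     (\<forall>m\<in>carrier M. \<forall>r\<in>carrier R. ract m r \<in> carrier M) \<and>
     (\<forall>m\<in>carrier M. \<forall>m'\<in>carrier M. \<forall>r\<in>carrier R.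
         ract (m \<oplus>\<^bsub>M\<^esub> m') r = ract m r \<oplus>\<^bsub>M\<^esub> ract m' r) \<and>
     (\<forall>m\<in>carrier M. \<forall>r\<in>carrier R. \<forall>r'\<in>carrier R.
         ract m (r \<oplus>\<^bsub>R\<^esub> r') = ract m r \<oplus>\<^bsub>M\<^esub> ract m r') \<and>
     (\<forall>m\<in>carrier M. \<forall>r\<in>carrier R. \<forall>r'\<in>carrier R.
         ract m (r \<otimes>\<^bsub>R\<^esub> r') = ract (ract m r) r') \<and>
     (\<forall>m\<in>carrier M. ract m \<one>\<^bsub>R\<^esub> = m)"

definition bimodule ::
    "('s, 'c) ring_scheme \<Rightarrow> ('r, 'd) ring_scheme \<Rightarrow> ('s, 'm) module \<Rightarrow> ('m \<Rightarrow> 'r \<Rightarrow> 'm) \<Rightarrow> bool" where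
  "bimodule S R M ract \<longleftrightarrow> left_module S M \<and> ring R \<and> right_action_axioms R M ract \<and>
     (\<forall>s\<in>carrier S. \<forall>m\<in>carrier M. \<forall>r\<in>carrier R.
        ract (s \<odot>\<^bsub>M\<^esub> m) r = s \<odot>\<^bsub>M\<^esub> ract m r)"

text \<open>Left S-linear maps M \<rightarrow> Q (the value (m)f is f m), extensional on carrier M.\<close>

definition lin_hom :: "('s, 'c) ring_scheme \<Rightarrow> ('s, 'm) module \<Rightarrow> ('s, 'q) module \<Rightarrow> ('m \<Rightarrow> 'q) set" where
  "lin_hom S M Q = {f. f \<in> carrier M \<rightarrow> carrier Q \<and> f \<in> extensional (carrier M) \<and>
     (\<forall>x\<in>carrier M. \<forall>y\<in>carrier M. f (x \<oplus>\<^bsub>M\<^esub> y) = f x \<oplus>\<^bsub>Q\<^esub> f y) \<and>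
     (\<forall>s\<in>carrier S. \<forall>x\<in>carrier M. f (s \<odot>\<^bsub>M\<^esub> x) = s \<odot>\<^bsub>Q\<^esub> f x)}"

text \<open>The ring End_S(M), with (m)(fg) = ((m)f)g.\<close>

definition End_ring :: "('s, 'c) ring_scheme \<Rightarrow> ('s, 'm) module \<Rightarrow> ('m \<Rightarrow> 'm) ring" where
  "End_ring S M = \<lparr>carrier = lin_hom S M M,
     monoid.mult = (\<lambda>f g. \<lambda>m\<in>carrier M. g (f m)),
     one = (\<lambda>m\<in>carrier M. m),
     ring.zero = (\<lambda>m\<in>carrier M. \<zero>\<^bsub>M\<^esub>),
     ring.add = (\<lambda>f g. \<lambda>m\<in>carrier M. f m \<oplus>\<^bsub>M\<^esub> g m)\<rparr>"

definition chi :: "('s, 'm) module \<Rightarrow> ('m \<Rightarrow> 'r \<Rightarrow> 'm) \<Rightarrow> 'r \<Rightarrow> ('m \<Rightarrow> 'm)" where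
  "chi M ract r = (\<lambda>m\<in>carrier M. ract m r)"

definition Hom_module ::
    "('r, 'd) ring_scheme \<Rightarrow> ('s, 'c) ring_scheme \<Rightarrow> ('s, 'm) module \<Rightarrow> ('m \<Rightarrow> 'r \<Rightarrow> 'm)
       \<Rightarrow> ('s, 'q) module \<Rightarrow> ('r, 'm \<Rightarrow> 'q) module" where
  "Hom_module R S M ract Q = \<lparr>carrier = lin_hom S M Q,
     monoid.mult = undefined, one = undefined,
     ring.zero = (\<lambda>m\<in>carrier M. \<zero>\<^bsub>Q\<^esub>),
     ring.add = (\<lambda>f g. \<lambda>m\<in>carrier M. f m \<oplus>\<^bsub>Q\<^esub> g m),
     smult = (\<lambda>r f. \<lambda>m\<in>carrier M. f (ract m r))\<rparr>"

text \<open>Tensor product M \<otimes>_R N of a right R-module (M, ract) and a left R-module N,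
  as an abelian group: free abelian group on carrier M \<times> carrier N modulo the
  subgroup generated by the bilinearity and balancing relations.\<close>

definition tensor_rels ::
    "('r, 'd) ring_scheme \<Rightarrow> ('s, 'm) module \<Rightarrow> ('m \<Rightarrow> 'r \<Rightarrow> 'm) \<Rightarrow> ('r, 'n) module
       \<Rightarrow> ('m \<times> 'n \<Rightarrow>\<^sub>0 int) set" where
  "tensor_rels R M ract N =
     {Poly_Mapping.single (m \<oplus>\<^bsub>M\<^esub> m', n) 1 - Poly_Mapping.single (m, n) 1 - Poly_Mapping.single (m', n) 1
        | m m' n. m \<in> carrier M \<and> m' \<in> carrier M \<and> n \<in> carrier N} \<union>
     {Poly_Mapping.single (m, n \<oplus>\<^bsub>N\<^esub> n') 1 - Poly_Mapping.single (m, n) 1 - Poly_Mapping.single (m, n') 1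
        | m n n'. m \<in> carrier M \<and> n \<in> carrier N \<and> n' \<in> carrier N} \<union>
     {Poly_Mapping.single (ract m r, n) 1 - Poly_Mapping.single (m, r \<odot>\<^bsub>N\<^esub> n) 1
        | m r n. m \<in> carrier M \<and> r \<in> carrier R \<and> n \<in> carrier N}"

definition tensor_group ::
    "('r, 'd) ring_scheme \<Rightarrow> ('s, 'm) module \<Rightarrow> ('m \<Rightarrow> 'r \<Rightarrow> 'm) \<Rightarrow> ('r, 'n) module
       \<Rightarrow> ('m \<times> 'n \<Rightarrow>\<^sub>0 int) set monoid" where
  "tensor_group R M ract N =
     free_Abelian_group (carrier M \<times> carrier N)
       Mod generate (free_Abelian_group (carrier M \<times> carrier N)) (tensor_rels R M ract N)"

definition tens ::
    "('r, 'd) ring_scheme \<Rightarrow> ('s, 'm) module \<Rightarrow> ('m \<Rightarrow> 'r \<Rightarrow> 'm) \<Rightarrow> ('r, 'n) module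
       \<Rightarrow> 'm \<Rightarrow> 'n \<Rightarrow> ('m \<times> 'n \<Rightarrow>\<^sub>0 int) set" where
  "tens R M ract N m n =
     generate (free_Abelian_group (carrier M \<times> carrier N)) (tensor_rels R M ract N)
       #>\<^bsub>free_Abelian_group (carrier M \<times> carrier N)\<^esub> Poly_Mapping.single (m, n) 1"

text \<open>M is a generator of the category of left S-modules if it
  generates every left S-module; the test modules range over carriers of the type
  given by the itself-argument.\<close>

definition generates :: "('s, 'c) ring_scheme \<Rightarrow> ('s, 'm) module \<Rightarrow> ('s, 'n) module \<Rightarrow> bool" where
  "generates S M N \<longleftrightarrow>
     carrier N = generate (add_monoid N) (\<Union>f\<in>lin_hom S M N. f ` carrier M)"

definition generator :: "('s, 'c) ring_scheme \<Rightarrow> ('s, 'm) module \<Rightarrow> 'n itself \<Rightarrow> bool" where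
  "generator S M _ \<longleftrightarrow> (\<forall>N :: ('s, 'n) module. left_module S N \<longrightarrow> generates S M N)"

text \<open>Epimorphism in the category of rings (test rings with carrier in type 't).\<close>

definition ring_epi ::
    "('a, 'c) ring_scheme \<Rightarrow> ('b, 'd) ring_scheme \<Rightarrow> ('a \<Rightarrow> 'b) \<Rightarrow> 't itself \<Rightarrow> bool" where
  "ring_epi A B f _ \<longleftrightarrow> f \<in> ring_hom A B \<and>
     (\<forall>T :: 't ring. ring T \<longrightarrow>
        (\<forall>g\<in>ring_hom B T. \<forall>h\<in>ring_hom B T.
           (\<forall>a\<in>carrier A. g (f a) = h (f a)) \<longrightarrow> (\<forall>b\<in>carrier B. g b = h b)))"

end

theory Submission
  imports Defs "HOL-Library.Nat_Bijection"
begin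

locale tctx =
  fixes R :: "('r,'d) ring_scheme" and M :: "('s,'m) module" and ract :: "'m \<Rightarrow> 'r \<Rightarrow> 'm"
    and N :: "('r,'n) module"
  assumes addM: "\<lbrakk>m \<in> carrier M; m' \<in> carrier M\<rbrakk> \<Longrightarrow> m \<oplus>\<^bsub>M\<^esub> m' \<in> carrier M"
    and addN: "\<lbrakk>n \<in> carrier N; n' \<in> carrier N\<rbrakk> \<Longrightarrow> n \<oplus>\<^bsub>N\<^esub> n' \<in> carrier N"
    and ractM: "\<lbrakk>m \<in> carrier M; r \<in> carrier R\<rbrakk> \<Longrightarrow> ract m r \<in> carrier M"
    and smultN: "\<lbrakk>r \<in> carrier R; n \<in> carrier N\<rbrakk> \<Longrightarrow> r \<odot>\<^bsub>N\<^esub> n \<in> carrier N"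
begin

abbreviation "FF \<equiv> free_Abelian_group (carrier M \<times> carrier N)"
abbreviation "KK \<equiv> generate FF (tensor_rels R M ract N)"
abbreviation "AA \<equiv> tensor_group R M ract N"
abbreviation "tt \<equiv> tens R M ract N"

lemma rels_sub: "tensor_rels R M ract N \<subseteq> carrier FF"
  unfolding tensor_rels_def
  by (auto simp: addM addN ractM smultN dest!: subsetD[OF keys_diff] subsetD[OF keys_add])

lemma FF_comm: "comm_group FF" by (rule abelian_free_Abelian_group)
lemma FF_group: "group FF" by simp

lemma KK_sub: "subgroup KK FF"
  using group.generate_is_subgroup[OF FF_group rels_sub] .

lemma KK_normal: "KK \<lhd> FF"
  using comm_group.subgroup_imp_normal[OF FF_comm KK_sub] .

lemma AA_def': "AA = FF Mod KK" by (simp add: tensor_group_def)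

lemma AA_comm: "comm_group AA"
  unfolding AA_def' using comm_group.abelian_FactGroup[OF FF_comm KK_sub] .

lemma AA_group: "group AA" using AA_comm comm_group.axioms(2) by blast

lemma tt_def': "tt m n = KK #>\<^bsub>FF\<^esub> frag_of (m, n)" by (simp add: tens_def)

lemma carrier_AA: "carrier AA = (\<lambda>x. KK #>\<^bsub>FF\<^esub> x) ` carrier FF"
  unfolding AA_def' by (rule carrier_FactGroup)

lemma coset_in_AA: "x \<in> carrier FF \<Longrightarrow> KK #>\<^bsub>FF\<^esub> x \<in> carrier AA"
  unfolding carrier_AA by blast

lemma tt_closed: "\<lbrakk>m \<in> carrier M; n \<in> carrier N\<rbrakk> \<Longrightarrow> tt m n \<in> carrier AA"
  unfolding tt_def' by (rule coset_in_AA) simp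

lemma coset_mult: "\<lbrakk>x \<in> carrier FF; y \<in> carrier FF\<rbrakk> \<Longrightarrow>
   (KK #>\<^bsub>FF\<^esub> x) \<otimes>\<^bsub>AA\<^esub> (KK #>\<^bsub>FF\<^esub> y) = KK #>\<^bsub>FF\<^esub> (x + y)"
  unfolding AA_def' using normal.rcos_sum[OF KK_normal] by simp

lemma coset_eqI: "\<lbrakk>x \<in> carrier FF; y \<in> carrier FF; x - y \<in> KK\<rbrakk> \<Longrightarrow>
   KK #>\<^bsub>FF\<^esub> x = KK #>\<^bsub>FF\<^esub> y"
proof -
  assume xy: "x \<in> carrier FF" "y \<in> carrier FF" "x - y \<in> KK"
  have "x \<otimes>\<^bsub>FF\<^esub> inv\<^bsub>FF\<^esub> y = x - y" using xy by simp
  then have "KK #>\<^bsub>FF\<^esub> (x \<otimes>\<^bsub>FF\<^esub> inv\<^bsub>FF\<^esub> y) = KK"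
    using group.coset_join2[OF FF_group _ KK_sub] xy
    by (metis group.inv_closed[OF FF_group] monoid.m_closed group.is_monoid[OF FF_group])
  then show ?thesis
    using group.coset_mult_inv1[OF FF_group] xy subgroup.subset[OF KK_sub] by blast
qed

lemma rel_in_KK: "x \<in> tensor_rels R M ract N \<Longrightarrow> x \<in> KK"
  by (rule generate.incl)

lemma tt_add1: "\<lbrakk>m \<in> carrier M; m' \<in> carrier M; n \<in> carrier N\<rbrakk> \<Longrightarrow>
   tt (m \<oplus>\<^bsub>M\<^esub> m') n = tt m n \<otimes>\<^bsub>AA\<^esub> tt m' n"
  unfolding tt_def'
  apply (subst coset_mult, simp, simp)
  apply (rule coset_eqI)
    apply (simp add: addM)
   apply (auto dest!: subsetD[OF keys_add])[1]
  apply (rule rel_in_KK)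
  unfolding tensor_rels_def
  apply (rule UnI1, rule UnI1)
  apply (rule CollectI, rule exI[of _ m], rule exI[of _ m'], rule exI[of _ n])
  by (simp add: diff_diff_eq)

lemma tt_add2: "\<lbrakk>m \<in> carrier M; n \<in> carrier N; n' \<in> carrier N\<rbrakk> \<Longrightarrow>
   tt m (n \<oplus>\<^bsub>N\<^esub> n') = tt m n \<otimes>\<^bsub>AA\<^esub> tt m n'"
  unfolding tt_def'
  apply (subst coset_mult, simp, simp)
  apply (rule coset_eqI)
    apply (simp add: addN)
   apply (auto dest!: subsetD[OF keys_add])[1]
  apply (rule rel_in_KK)
  unfolding tensor_rels_def
  apply (rule UnI1, rule UnI2)
  apply (rule CollectI, rule exI[of _ m], rule exI[of _ n], rule exI[of _ n'])
  by (simp add: diff_diff_eq)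

lemma tt_bal: "\<lbrakk>m \<in> carrier M; r \<in> carrier R; n \<in> carrier N\<rbrakk> \<Longrightarrow>
   tt (ract m r) n = tt m (r \<odot>\<^bsub>N\<^esub> n)"
  unfolding tt_def'
  apply (rule coset_eqI)
    apply (simp add: ractM)
   apply (simp add: smultN)
  apply (rule rel_in_KK)
  unfolding tensor_rels_def
  apply (rule UnI2)
  by blast

lemma tt_universal:
  assumes G: "comm_group G"
    and cl: "\<And>m n. \<lbrakk>m \<in> carrier M; n \<in> carrier N\<rbrakk> \<Longrightarrow> \<beta> m n \<in> carrier G"
    and a1: "\<And>m m' n. \<lbrakk>m \<in> carrier M; m' \<in> carrier M; n \<in> carrier N\<rbrakk> \<Longrightarrow>
                \<beta> (m \<oplus>\<^bsub>M\<^esub> m') n = \<beta> m n \<otimes>\<^bsub>G\<^esub> \<beta> m' n"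
    and a2: "\<And>m n n'. \<lbrakk>m \<in> carrier M; n \<in> carrier N; n' \<in> carrier N\<rbrakk> \<Longrightarrow>
                \<beta> m (n \<oplus>\<^bsub>N\<^esub> n') = \<beta> m n \<otimes>\<^bsub>G\<^esub> \<beta> m n'"
    and a3: "\<And>m r n. \<lbrakk>m \<in> carrier M; r \<in> carrier R; n \<in> carrier N\<rbrakk> \<Longrightarrow>
                \<beta> (ract m r) n = \<beta> m (r \<odot>\<^bsub>N\<^esub> n)"
  obtains \<phi> where "\<phi> \<in> hom AA G" "\<And>m n. \<lbrakk>m \<in> carrier M; n \<in> carrier N\<rbrakk> \<Longrightarrow> \<phi> (tt m n) = \<beta> m n"
proof -
  interpret G: comm_group G by (rule G)
  obtain h where h: "h \<in> hom FF G" "\<And>x. x \<in> carrier M \<times> carrier N \<Longrightarrow> h (frag_of x) = case_prod \<beta> x"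
  proof -
    have sub: "case_prod \<beta> ` (carrier M \<times> carrier N) \<subseteq> carrier G" using cl by auto
    show ?thesis by (rule G.free_Abelian_group_universal[OF sub], rule that, assumption+)
  qed
  interpret hh: group_hom FF G h
    by (simp add: group_hom_def group_hom_axioms_def h(1) G.is_group)
  have hdiff: "h (x - y) = h x \<otimes>\<^bsub>G\<^esub> inv\<^bsub>G\<^esub> h y" if "x \<in> carrier FF" "y \<in> carrier FF" for x y
  proof -
    have e: "x - y = x \<otimes>\<^bsub>FF\<^esub> inv\<^bsub>FF\<^esub> y" using that by simp
    have "h (x - y) = h (x \<otimes>\<^bsub>FF\<^esub> inv\<^bsub>FF\<^esub> y)" by (simp only: e)
    also have "\<dots> = h x \<otimes>\<^bsub>G\<^esub> h (inv\<^bsub>FF\<^esub> y)"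
      by (rule hh.hom_mult) (use that in \<open>simp_all only: group.inv_closed[OF FF_group]\<close>)
    also have "h (inv\<^bsub>FF\<^esub> y) = inv\<^bsub>G\<^esub> h y" by (rule hh.hom_inv[OF that(2)])
    finally show ?thesis .
  qed
  have ker: "tensor_rels R M ract N \<subseteq> kernel FF G h"
  proof
    fix z assume z: "z \<in> tensor_rels R M ract N"
    then have zc: "z \<in> carrier FF" using rels_sub by blast
    have "h z = \<one>\<^bsub>G\<^esub>"
      using z unfolding tensor_rels_def
    proof (elim UnE CollectE exE conjE)
      fix m m' n assume e: "z = frag_of (m \<oplus>\<^bsub>M\<^esub> m', n) - frag_of (m, n) - frag_of (m', n)"
        and c: "m \<in> carrier M" "m' \<in> carrier M" "n \<in> carrier N"
      have "h z = (\<beta> (m \<oplus>\<^bsub>M\<^esub> m') n \<otimes>\<^bsub>G\<^esub> inv\<^bsub>G\<^esub> \<beta> m n) \<otimes>\<^bsub>G\<^esub> inv\<^bsub>G\<^esub> \<beta> m' n"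
        unfolding e using c
        apply (subst hdiff)
          apply (auto dest!: subsetD[OF keys_diff] simp: addM)[2]
        apply (subst hdiff)
        by (auto simp: addM h(2))
      also have "\<dots> = \<one>\<^bsub>G\<^esub>" using c by (simp add: a1 cl G.m_assoc G.m_comm[of "\<beta> m n"] addM)
      finally show ?thesis .
    next
      fix m n n' assume e: "z = frag_of (m, n \<oplus>\<^bsub>N\<^esub> n') - frag_of (m, n) - frag_of (m, n')"
        and c: "m \<in> carrier M" "n \<in> carrier N" "n' \<in> carrier N"
      have "h z = (\<beta> m (n \<oplus>\<^bsub>N\<^esub> n') \<otimes>\<^bsub>G\<^esub> inv\<^bsub>G\<^esub> \<beta> m n) \<otimes>\<^bsub>G\<^esub> inv\<^bsub>G\<^esub> \<beta> m n'"
        unfolding e using c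
        apply (subst hdiff)
          apply (auto dest!: subsetD[OF keys_diff] simp: addN)[2]
        apply (subst hdiff)
        by (auto simp: addN h(2))
      also have "\<dots> = \<one>\<^bsub>G\<^esub>" using c by (simp add: a2 cl G.m_assoc G.m_comm[of "\<beta> m n"] addN)
      finally show ?thesis .
    next
      fix m r n assume e: "z = frag_of (ract m r, n) - frag_of (m, r \<odot>\<^bsub>N\<^esub> n)"
        and c: "m \<in> carrier M" "r \<in> carrier R" "n \<in> carrier N"
      have "h z = \<beta> (ract m r) n \<otimes>\<^bsub>G\<^esub> inv\<^bsub>G\<^esub> \<beta> m (r \<odot>\<^bsub>N\<^esub> n)"
        unfolding e using c
        by (subst hdiff) (auto simp: ractM smultN h(2))
      also have "\<dots> = \<one>\<^bsub>G\<^esub>" using c by (simp add: a3 cl ractM smultN)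
      finally show ?thesis .
    qed
    then show "z \<in> kernel FF G h" using zc by (simp add: kernel_def)
  qed
  have KKker: "KK \<subseteq> kernel FF G h"
    using group.generate_subgroup_incl[OF FF_group ker hh.subgroup_kernel] .
  obtain g where g: "g \<in> hom (FF Mod KK) G" "\<And>x. x \<in> carrier FF \<Longrightarrow> g (KK #>\<^bsub>FF\<^esub> x) = h x"
  proof (rule FactGroup_universal[OF h(1) KK_normal])
    fix x y assume xy: "x \<in> carrier FF" "y \<in> carrier FF" "KK #>\<^bsub>FF\<^esub> x = KK #>\<^bsub>FF\<^esub> y"
    have "KK #>\<^bsub>FF\<^esub> (x \<otimes>\<^bsub>FF\<^esub> inv\<^bsub>FF\<^esub> y) = KK"
      using group.coset_mult_inv2[OF FF_group xy(3) xy(1,2)] subgroup.subset[OF KK_sub] by blast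
    then have "x \<otimes>\<^bsub>FF\<^esub> inv\<^bsub>FF\<^esub> y \<in> KK"
      using group.coset_join1[OF FF_group _ _ KK_sub] xy
      by (metis group.inv_closed[OF FF_group] monoid.m_closed group.is_monoid[OF FF_group])
    then have "h (x \<otimes>\<^bsub>FF\<^esub> inv\<^bsub>FF\<^esub> y) = \<one>\<^bsub>G\<^esub>" using KKker by (auto simp: kernel_def)
    then have "h x \<otimes>\<^bsub>G\<^esub> inv\<^bsub>G\<^esub> h y = \<one>\<^bsub>G\<^esub>" using xy hdiff[of x y] by simp
    then have "inv\<^bsub>G\<^esub> (inv\<^bsub>G\<^esub> h y) = h x"
      by (rule G.inv_equality) (use xy in simp_all)
    then show "h x = h y" using xy by simp
  qed (rule that; assumption)
  show thesis
  proof (rule that[of g])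
    show "g \<in> hom AA G" using g(1) by (simp add: AA_def')
    fix m n assume "m \<in> carrier M" "n \<in> carrier N"
    then show "g (tt m n) = \<beta> m n" by (simp add: tt_def' g(2) h(2))
  qed
qed

lemma tt_hom_eq:
  assumes G: "group G" and \<phi>: "\<phi> \<in> hom AA G" and \<psi>: "\<psi> \<in> hom AA G"
    and eq: "\<And>m n. \<lbrakk>m \<in> carrier M; n \<in> carrier N\<rbrakk> \<Longrightarrow> \<phi> (tt m n) = \<psi> (tt m n)"
    and a: "a \<in> carrier AA"
  shows "\<phi> a = \<psi> a"
proof -
  interpret G: group G by (rule G)
  have pi: "(\<lambda>x. KK #>\<^bsub>FF\<^esub> x) \<in> hom FF AA"
    unfolding AA_def' by (rule normal.r_coset_hom_Mod[OF KK_normal])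
  have h1: "(\<lambda>x. \<phi> (KK #>\<^bsub>FF\<^esub> x)) \<in> hom FF G" using hom_compose[OF pi \<phi>] by (simp add: comp_def)
  have h2: "(\<lambda>x. \<psi> (KK #>\<^bsub>FF\<^esub> x)) \<in> hom FF G" using hom_compose[OF pi \<psi>] by (simp add: comp_def)
  interpret g1: group_hom FF G "\<lambda>x. \<phi> (KK #>\<^bsub>FF\<^esub> x)"
    by (simp add: group_hom_def group_hom_axioms_def h1 G.is_group)
  interpret g2: group_hom FF G "\<lambda>x. \<psi> (KK #>\<^bsub>FF\<^esub> x)"
    by (simp add: group_hom_def group_hom_axioms_def h2 G.is_group)
  obtain x where x: "x \<in> carrier FF" "a = KK #>\<^bsub>FF\<^esub> x" using a carrier_AA by blast
  have "\<phi> (KK #>\<^bsub>FF\<^esub> x) = \<psi> (KK #>\<^bsub>FF\<^esub> x)"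
  proof (rule free_Abelian_group_induct[of x "carrier M \<times> carrier N"])
    show "Poly_Mapping.keys x \<subseteq> carrier M \<times> carrier N" using x(1) by simp
    show "\<phi> (KK #>\<^bsub>FF\<^esub> 0) = \<psi> (KK #>\<^bsub>FF\<^esub> 0)"
      using g1.hom_one g2.hom_one by simp
  next
    fix x y :: "'m \<times> 'n \<Rightarrow>\<^sub>0 int"
    assume xy: "Poly_Mapping.keys x \<subseteq> carrier M \<times> carrier N" "Poly_Mapping.keys y \<subseteq> carrier M \<times> carrier N"
      "\<phi> (KK #>\<^bsub>FF\<^esub> x) = \<psi> (KK #>\<^bsub>FF\<^esub> x)" "\<phi> (KK #>\<^bsub>FF\<^esub> y) = \<psi> (KK #>\<^bsub>FF\<^esub> y)"
    have e: "x - y = x \<otimes>\<^bsub>FF\<^esub> inv\<^bsub>FF\<^esub> y" using xy by simp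
    have c: "x \<in> carrier FF" "y \<in> carrier FF" "inv\<^bsub>FF\<^esub> y \<in> carrier FF"
      using xy group.inv_closed[OF FF_group, of y] by simp_all
    show "\<phi> (KK #>\<^bsub>FF\<^esub> (x - y)) = \<psi> (KK #>\<^bsub>FF\<^esub> (x - y))"
      unfolding e using xy(3,4) c
      by (simp only: g1.hom_mult g2.hom_mult g1.hom_inv g2.hom_inv)
  next
    fix a assume "a \<in> carrier M \<times> carrier N"
    then show "\<phi> (KK #>\<^bsub>FF\<^esub> frag_of a) = \<psi> (KK #>\<^bsub>FF\<^esub> frag_of a)"
      using eq[of "fst a" "snd a"] by (cases a) (simp add: tt_def')
  qed
  then show ?thesis using x by simp
qed

end


lemma lin_homD:
  assumes "f \<in> lin_hom S M Q"
  shows "\<And>m. m \<in> carrier M \<Longrightarrow> f m \<in> carrier Q"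
    and "f \<in> extensional (carrier M)"
    and "\<And>x y. x \<in> carrier M \<Longrightarrow> y \<in> carrier M \<Longrightarrow> f (x \<oplus>\<^bsub>M\<^esub> y) = f x \<oplus>\<^bsub>Q\<^esub> f y"
    and "\<And>s x. s \<in> carrier S \<Longrightarrow> x \<in> carrier M \<Longrightarrow> f (s \<odot>\<^bsub>M\<^esub> x) = s \<odot>\<^bsub>Q\<^esub> f x"
  using assms unfolding lin_hom_def by auto

lemma lin_homI:
  assumes "\<And>m. m \<in> carrier M \<Longrightarrow> f m \<in> carrier Q"
    and "f \<in> extensional (carrier M)"
    and "\<And>x y. x \<in> carrier M \<Longrightarrow> y \<in> carrier M \<Longrightarrow> f (x \<oplus>\<^bsub>M\<^esub> y) = f x \<oplus>\<^bsub>Q\<^esub> f y"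
    and "\<And>s x. s \<in> carrier S \<Longrightarrow> x \<in> carrier M \<Longrightarrow> f (s \<odot>\<^bsub>M\<^esub> x) = s \<odot>\<^bsub>Q\<^esub> f x"
  shows "f \<in> lin_hom S M Q"
  using assms unfolding lin_hom_def by auto

lemma lin_hom_eqI:
  "\<lbrakk>f \<in> lin_hom S M Q; g \<in> lin_hom S M Q; \<And>m. m \<in> carrier M \<Longrightarrow> f m = g m\<rbrakk> \<Longrightarrow> f = g"
  by (rule extensionalityI[of _ "carrier M"]) (auto dest: lin_homD(2))

locale lm =
  fixes S :: "('s,'c) ring_scheme" and M :: "('s,'m) module"
  assumes lm: "left_module S M"
begin

sublocale S: ring S using lm by (simp add: left_module_def)
sublocale M: abelian_group M using lm by (simp add: left_module_def)

lemma smult_closed: "\<lbrakk>a \<in> carrier S; x \<in> carrier M\<rbrakk> \<Longrightarrow> a \<odot>\<^bsub>M\<^esub> x \<in> carrier M"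
  using lm by (simp add: left_module_def module_axioms_def)
lemma smult_l_distr: "\<lbrakk>a \<in> carrier S; b \<in> carrier S; x \<in> carrier M\<rbrakk> \<Longrightarrow>
   (a \<oplus>\<^bsub>S\<^esub> b) \<odot>\<^bsub>M\<^esub> x = a \<odot>\<^bsub>M\<^esub> x \<oplus>\<^bsub>M\<^esub> b \<odot>\<^bsub>M\<^esub> x"
  using lm by (simp add: left_module_def module_axioms_def)
lemma smult_r_distr: "\<lbrakk>a \<in> carrier S; x \<in> carrier M; y \<in> carrier M\<rbrakk> \<Longrightarrow>
   a \<odot>\<^bsub>M\<^esub> (x \<oplus>\<^bsub>M\<^esub> y) = a \<odot>\<^bsub>M\<^esub> x \<oplus>\<^bsub>M\<^esub> a \<odot>\<^bsub>M\<^esub> y"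
  using lm by (simp add: left_module_def module_axioms_def)
lemma smult_assoc1: "\<lbrakk>a \<in> carrier S; b \<in> carrier S; x \<in> carrier M\<rbrakk> \<Longrightarrow>
   (a \<otimes>\<^bsub>S\<^esub> b) \<odot>\<^bsub>M\<^esub> x = a \<odot>\<^bsub>M\<^esub> (b \<odot>\<^bsub>M\<^esub> x)"
  using lm by (simp add: left_module_def module_axioms_def)
lemma smult_one: "x \<in> carrier M \<Longrightarrow> \<one>\<^bsub>S\<^esub> \<odot>\<^bsub>M\<^esub> x = x"
  using lm by (simp add: left_module_def module_axioms_def)

lemma smult_zero: "x \<in> carrier M \<Longrightarrow> \<zero>\<^bsub>S\<^esub> \<odot>\<^bsub>M\<^esub> x = \<zero>\<^bsub>M\<^esub>"
proof -
  assume x: "x \<in> carrier M"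
  have "\<zero>\<^bsub>S\<^esub> \<odot>\<^bsub>M\<^esub> x \<oplus>\<^bsub>M\<^esub> \<zero>\<^bsub>S\<^esub> \<odot>\<^bsub>M\<^esub> x = \<zero>\<^bsub>S\<^esub> \<odot>\<^bsub>M\<^esub> x"
    using smult_l_distr[of "\<zero>\<^bsub>S\<^esub>" "\<zero>\<^bsub>S\<^esub>" x] x by simp
  then show ?thesis using x smult_closed[of "\<zero>\<^bsub>S\<^esub>" x] M.add.l_cancel_one by simp
qed

lemma smult_neg: "\<lbrakk>a \<in> carrier S; x \<in> carrier M\<rbrakk> \<Longrightarrow> (\<ominus>\<^bsub>S\<^esub> a) \<odot>\<^bsub>M\<^esub> x = \<ominus>\<^bsub>M\<^esub> (a \<odot>\<^bsub>M\<^esub> x)"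
proof -
  assume ax: "a \<in> carrier S" "x \<in> carrier M"
  have "(\<ominus>\<^bsub>S\<^esub> a) \<odot>\<^bsub>M\<^esub> x \<oplus>\<^bsub>M\<^esub> a \<odot>\<^bsub>M\<^esub> x = \<zero>\<^bsub>M\<^esub>"
    using smult_l_distr[of "\<ominus>\<^bsub>S\<^esub> a" a x] ax smult_zero by (simp add: S.l_neg)
  then show ?thesis using ax smult_closed[of "\<ominus>\<^bsub>S\<^esub> a" x] smult_closed[of a x]
    by (intro M.minus_equality[symmetric]) simp_all
qed

abbreviation "E \<equiv> End_ring S M"

lemma E_carrier: "carrier E = lin_hom S M M" by (simp add: End_ring_def)
lemma E_mult: "f \<otimes>\<^bsub>E\<^esub> g = (\<lambda>m\<in>carrier M. g (f m))" by (simp add: End_ring_def)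
lemma E_one: "\<one>\<^bsub>E\<^esub> = (\<lambda>m\<in>carrier M. m)" by (simp add: End_ring_def)
lemma E_zero: "\<zero>\<^bsub>E\<^esub> = (\<lambda>m\<in>carrier M. \<zero>\<^bsub>M\<^esub>)" by (simp add: End_ring_def)
lemma E_add: "f \<oplus>\<^bsub>E\<^esub> g = (\<lambda>m\<in>carrier M. f m \<oplus>\<^bsub>M\<^esub> g m)" by (simp add: End_ring_def)

lemma lin_hom_zero:
  assumes "f \<in> lin_hom S M Q" "abelian_group Q"
  shows "f \<zero>\<^bsub>M\<^esub> = \<zero>\<^bsub>Q\<^esub>"
proof -
  interpret Q: abelian_group Q by (rule assms(2))
  have "f \<zero>\<^bsub>M\<^esub> \<oplus>\<^bsub>Q\<^esub> f \<zero>\<^bsub>M\<^esub> = f \<zero>\<^bsub>M\<^esub>"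
    using lin_homD(3)[OF assms(1), of "\<zero>\<^bsub>M\<^esub>" "\<zero>\<^bsub>M\<^esub>"] by simp
  then show ?thesis using lin_homD(1)[OF assms(1), of "\<zero>\<^bsub>M\<^esub>"] Q.add.l_cancel_one by simp
qed

lemma lin_hom_neg:
  assumes "f \<in> lin_hom S M Q" "abelian_group Q" "x \<in> carrier M"
  shows "f (\<ominus>\<^bsub>M\<^esub> x) = \<ominus>\<^bsub>Q\<^esub> f x"
proof -
  interpret Q: abelian_group Q by (rule assms(2))
  have "f (\<ominus>\<^bsub>M\<^esub> x) \<oplus>\<^bsub>Q\<^esub> f x = \<zero>\<^bsub>Q\<^esub>"
    using lin_homD(3)[OF assms(1), of "\<ominus>\<^bsub>M\<^esub> x" x] assms(3) lin_hom_zero[OF assms(1,2)] by (simp add: M.l_neg)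
  then show ?thesis using lin_homD(1)[OF assms(1)] assms(3)
    by (intro Q.minus_equality[symmetric]) simp_all
qed

lemma smult_zero2: "a \<in> carrier S \<Longrightarrow> a \<odot>\<^bsub>M\<^esub> \<zero>\<^bsub>M\<^esub> = \<zero>\<^bsub>M\<^esub>"
proof -
  assume a: "a \<in> carrier S"
  have "a \<odot>\<^bsub>M\<^esub> \<zero>\<^bsub>M\<^esub> \<oplus>\<^bsub>M\<^esub> a \<odot>\<^bsub>M\<^esub> \<zero>\<^bsub>M\<^esub> = a \<odot>\<^bsub>M\<^esub> \<zero>\<^bsub>M\<^esub>"
    using smult_r_distr[of a "\<zero>\<^bsub>M\<^esub>" "\<zero>\<^bsub>M\<^esub>"] a by simp
  then show ?thesis using a smult_closed[of a "\<zero>\<^bsub>M\<^esub>"] M.add.l_cancel_one by simp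
qed

lemma E_mult_closed: "\<lbrakk>f \<in> lin_hom S M M; g \<in> lin_hom S M M\<rbrakk> \<Longrightarrow> (\<lambda>m\<in>carrier M. g (f m)) \<in> lin_hom S M M"
  by (rule lin_homI) (auto simp: lin_homD smult_closed)

lemma E_add_closed: "\<lbrakk>f \<in> lin_hom S M M; g \<in> lin_hom S M M\<rbrakk> \<Longrightarrow> (\<lambda>m\<in>carrier M. f m \<oplus>\<^bsub>M\<^esub> g m) \<in> lin_hom S M M"
  apply (rule lin_homI)
  apply (auto simp: lin_homD smult_closed smult_r_distr)
  by (simp add: M.a_ac lin_homD)

lemma E_one_closed: "(\<lambda>m\<in>carrier M. m) \<in> lin_hom S M M"
  by (rule lin_homI) (auto simp: smult_closed)

lemma E_zero_closed: "(\<lambda>m\<in>carrier M. \<zero>\<^bsub>M\<^esub>) \<in> lin_hom S M M"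
  by (rule lin_homI) (auto simp: smult_closed smult_zero2)

lemma E_neg_closed: "f \<in> lin_hom S M M \<Longrightarrow> (\<lambda>m\<in>carrier M. \<ominus>\<^bsub>M\<^esub> f m) \<in> lin_hom S M M"
proof (rule lin_homI)
  assume f: "f \<in> lin_hom S M M"
  show "\<And>x y. x \<in> carrier M \<Longrightarrow> y \<in> carrier M \<Longrightarrow> (\<lambda>m\<in>carrier M. \<ominus>\<^bsub>M\<^esub> f m) (x \<oplus>\<^bsub>M\<^esub> y) =
      (\<lambda>m\<in>carrier M. \<ominus>\<^bsub>M\<^esub> f m) x \<oplus>\<^bsub>M\<^esub> (\<lambda>m\<in>carrier M. \<ominus>\<^bsub>M\<^esub> f m) y"
    using f by (simp add: lin_homD M.minus_add)
  show "\<And>s x. s \<in> carrier S \<Longrightarrow> x \<in> carrier M \<Longrightarrow> (\<lambda>m\<in>carrier M. \<ominus>\<^bsub>M\<^esub> f m) (s \<odot>\<^bsub>M\<^esub> x) =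
      s \<odot>\<^bsub>M\<^esub> (\<lambda>m\<in>carrier M. \<ominus>\<^bsub>M\<^esub> f m) x"
  proof -
    fix s x assume sx: "s \<in> carrier S" "x \<in> carrier M"
    have "s \<odot>\<^bsub>M\<^esub> (\<ominus>\<^bsub>M\<^esub> f x) \<oplus>\<^bsub>M\<^esub> s \<odot>\<^bsub>M\<^esub> f x = \<zero>\<^bsub>M\<^esub>"
      using sx f smult_r_distr[of s "\<ominus>\<^bsub>M\<^esub> f x" "f x"] smult_zero2 by (simp add: lin_homD M.l_neg)
    then have "s \<odot>\<^bsub>M\<^esub> (\<ominus>\<^bsub>M\<^esub> f x) = \<ominus>\<^bsub>M\<^esub> (s \<odot>\<^bsub>M\<^esub> f x)"
      using sx f lin_homD(1)[OF f, of x] smult_closed[of s "\<ominus>\<^bsub>M\<^esub> f x"] smult_closed[of s "f x"]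
      by (intro M.minus_equality[symmetric]) simp_all
    then show "(\<lambda>m\<in>carrier M. \<ominus>\<^bsub>M\<^esub> f m) (s \<odot>\<^bsub>M\<^esub> x) = s \<odot>\<^bsub>M\<^esub> (\<lambda>m\<in>carrier M. \<ominus>\<^bsub>M\<^esub> f m) x"
      using sx f by (simp add: smult_closed lin_homD)
  qed
qed (auto simp: lin_homD)

lemma lin_restrict: "f \<in> lin_hom S M Q \<Longrightarrow> (\<lambda>m\<in>carrier M. f m) = f"
  by (simp add: extensional_restrict lin_homD(2))

lemma ring_E: "ring E"
proof (rule ringI)
  show "abelian_group E"
  proof (rule abelian_groupI)
    fix x y z assume xyz: "x \<in> carrier E" "y \<in> carrier E" "z \<in> carrier E"
    then show "x \<oplus>\<^bsub>E\<^esub> y \<in> carrier E" by (simp add: E_carrier E_add E_add_closed)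
    show "x \<oplus>\<^bsub>E\<^esub> y \<oplus>\<^bsub>E\<^esub> z = x \<oplus>\<^bsub>E\<^esub> (y \<oplus>\<^bsub>E\<^esub> z)"
      using xyz by (auto simp: E_carrier E_add lin_homD M.a_assoc intro!: restrict_ext)
    show "x \<oplus>\<^bsub>E\<^esub> y = y \<oplus>\<^bsub>E\<^esub> x"
      using xyz by (auto simp: E_carrier E_add lin_homD M.a_comm intro!: restrict_ext)
  next
    show "\<zero>\<^bsub>E\<^esub> \<in> carrier E" by (simp add: E_carrier E_zero E_zero_closed)
  next
    fix x assume x: "x \<in> carrier E"
    then show "\<zero>\<^bsub>E\<^esub> \<oplus>\<^bsub>E\<^esub> x = x"
      by (auto simp: E_carrier E_add E_zero lin_homD lin_restrict cong: restrict_cong)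
    show "\<exists>y\<in>carrier E. y \<oplus>\<^bsub>E\<^esub> x = \<zero>\<^bsub>E\<^esub>"
      using x E_neg_closed[of x]
      by (intro bexI[of _ "\<lambda>m\<in>carrier M. \<ominus>\<^bsub>M\<^esub> x m"])
         (auto simp: E_carrier E_add E_zero lin_homD M.l_neg intro!: restrict_ext)
  qed
next
  show "monoid E"
  proof (rule monoidI)
    fix x y z assume xyz: "x \<in> carrier E" "y \<in> carrier E" "z \<in> carrier E"
    then show "x \<otimes>\<^bsub>E\<^esub> y \<in> carrier E" by (simp add: E_carrier E_mult E_mult_closed)
    show "x \<otimes>\<^bsub>E\<^esub> y \<otimes>\<^bsub>E\<^esub> z = x \<otimes>\<^bsub>E\<^esub> (y \<otimes>\<^bsub>E\<^esub> z)"
      using xyz by (auto simp: E_carrier E_mult lin_homD intro!: restrict_ext)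
  next
    show "\<one>\<^bsub>E\<^esub> \<in> carrier E" by (simp add: E_carrier E_one E_one_closed)
  next
    fix x assume x: "x \<in> carrier E"
    then show "\<one>\<^bsub>E\<^esub> \<otimes>\<^bsub>E\<^esub> x = x"
      by (auto simp: E_carrier E_mult E_one lin_homD lin_restrict cong: restrict_cong)
    show "x \<otimes>\<^bsub>E\<^esub> \<one>\<^bsub>E\<^esub> = x"
      using x by (auto simp: E_carrier E_mult E_one lin_homD lin_restrict cong: restrict_cong)
  qed
next
  fix x y z assume xyz: "x \<in> carrier E" "y \<in> carrier E" "z \<in> carrier E"
  then show "(x \<oplus>\<^bsub>E\<^esub> y) \<otimes>\<^bsub>E\<^esub> z = x \<otimes>\<^bsub>E\<^esub> z \<oplus>\<^bsub>E\<^esub> y \<otimes>\<^bsub>E\<^esub> z"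
    by (auto simp: E_carrier E_mult E_add lin_homD intro!: restrict_ext)
  show "z \<otimes>\<^bsub>E\<^esub> (x \<oplus>\<^bsub>E\<^esub> y) = z \<otimes>\<^bsub>E\<^esub> x \<oplus>\<^bsub>E\<^esub> z \<otimes>\<^bsub>E\<^esub> y"
    using xyz by (auto simp: E_carrier E_mult E_add lin_homD intro!: restrict_ext)
qed

end


definition kl :: "('a \<Rightarrow>\<^sub>0 int) \<Rightarrow> 'a list" where
  "kl p = (SOME xs. distinct xs \<and> set xs = Poly_Mapping.keys p)"

lemma kl: "distinct (kl p) \<and> set (kl p) = Poly_Mapping.keys p"
  unfolding kl_def by (rule someI_ex) (use finite_distinct_list[OF finite_keys, of p] in blast)

lemma mod3_simps [simp]:
  "Suc (3*a) \<noteq> 3*b" "3*b \<noteq> Suc (3*a)" "Suc (Suc (3*a)) \<noteq> 3*b" "3*b \<noteq> Suc (Suc (3*a))"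
  "Suc (3*a) \<noteq> Suc (Suc (3*b))" "Suc (Suc (3*b)) \<noteq> Suc (3*a)"
  for a b :: nat by presburger+

definition enc :: "'u \<Rightarrow> (('u \<times> 'u) \<Rightarrow>\<^sub>0 int) \<Rightarrow> ('u \<times> nat) set" where
  "enc e p = insert (e, 0)
     ((\<lambda>i. (fst (kl p ! i), 3*i+1)) ` {..<length (kl p)} \<union>
      (\<lambda>i. (snd (kl p ! i), 3*i+2)) ` {..<length (kl p)} \<union>
      (\<lambda>i. (e, 3 * prod_encode (i, int_encode (Poly_Mapping.lookup p (kl p ! i))) + 3)) ` {..<length (kl p)})"

lemma enc_e: "enc e p = enc e' p' \<Longrightarrow> e = e'"
proof -
  assume h: "enc e p = enc e' p'"
  have "(e, 0) \<in> enc e p" by (simp add: enc_def)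
  then have "(e, 0) \<in> enc e' p'" by (simp only: h)
  then show ?thesis unfolding enc_def by auto
qed

lemma enc_Z: "{k. (e, 3*k+3) \<in> enc e p} =
   (\<lambda>i. prod_encode (i, int_encode (Poly_Mapping.lookup p (kl p ! i)))) ` {..<length (kl p)}"
proof -
  show ?thesis unfolding enc_def by auto
qed

lemma enc_fst: "i < length (kl p) \<Longrightarrow> (a, 3*i+1) \<in> enc e p \<longleftrightarrow> a = fst (kl p ! i)"
proof -
  assume i: "i < length (kl p)"
  show ?thesis unfolding enc_def using i by auto
qed

lemma enc_snd: "i < length (kl p) \<Longrightarrow> (a, 3*i+2) \<in> enc e p \<longleftrightarrow> a = snd (kl p ! i)"
proof -
  assume i: "i < length (kl p)"
  show ?thesis unfolding enc_def using i by auto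
qed

lemma enc_inj: "enc e p = enc e' p' \<Longrightarrow> e = e' \<and> p = p'"
proof -
  assume h: "enc e p = enc e' p'"
  have ee: "e = e'" using enc_e[OF h] .
  define xs where "xs = kl p"
  define ys where "ys = kl p'"
  define W where "W q = (\<lambda>i. (i, Poly_Mapping.lookup q (kl q ! i))) ` {..<length (kl q)}" for q :: "('a \<times> 'a) \<Rightarrow>\<^sub>0 int"
  define dec where "dec k = (case prod_decode k of (i, z) \<Rightarrow> (i, int_decode z))" for k
  have WZ: "W q = dec ` {k. (e, 3*k+3) \<in> enc e q}" for q
    unfolding enc_Z W_def image_image dec_def by simp
  have WW: "W p = W p'" using WZ[of p] WZ[of p'] h ee by simp
  have len: "length xs = length ys"
  proof -
    have "fst ` W p = {..<length xs}" "fst ` W p' = {..<length ys}"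
      unfolding W_def xs_def ys_def image_image by simp_all
    then show ?thesis using WW by (metis lessThan_eq_iff)
  qed
  have lk: "Poly_Mapping.lookup p (xs ! i) = Poly_Mapping.lookup p' (ys ! i)" if i: "i < length xs" for i
  proof -
    have "(i, Poly_Mapping.lookup p (xs ! i)) \<in> W p'" using WW i unfolding W_def xs_def by auto
    then show ?thesis unfolding W_def ys_def by auto
  qed
  have nth: "xs ! i = ys ! i" if i: "i < length xs" for i
  proof -
    have i': "i < length ys" using i len by simp
    have "(fst (xs ! i), 3*i+1) \<in> enc e' p'"
      using h i enc_fst[of i p "fst (xs ! i)" e] by (simp add: xs_def)
    then have 1: "fst (xs ! i) = fst (ys ! i)" using enc_fst[of i p'] i' by (simp add: ys_def)
    have "(snd (xs ! i), 3*i+2) \<in> enc e' p'"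
      using h i enc_snd[of i p "snd (xs ! i)" e] by (simp add: xs_def)
    then have 2: "snd (xs ! i) = snd (ys ! i)" using enc_snd[of i p'] i' by (simp add: ys_def)
    show ?thesis using 1 2 by (simp add: prod_eq_iff)
  qed
  have xy: "xs = ys" using len nth by (simp add: nth_equalityI)
  have "p = p'"
  proof (rule poly_mapping_eqI)
    fix k
    show "Poly_Mapping.lookup p k = Poly_Mapping.lookup p' k"
    proof (cases "k \<in> set xs")
      case True
      then obtain i where i: "i < length xs" "k = xs ! i" by (auto simp: in_set_conv_nth)
      then show ?thesis using lk[OF i(1)] xy by simp
    next
      case False
      then have "k \<notin> Poly_Mapping.keys p" "k \<notin> Poly_Mapping.keys p'"
        using kl[of p] kl[of p'] xy unfolding xs_def ys_def by auto
      then show ?thesis by (simp add: in_keys_iff)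
    qed
  qed
  then show ?thesis using ee by simp
qed



lemma hom_mult_pointwise:
  assumes G: "comm_group G" and "\<phi> \<in> hom A G" "\<psi> \<in> hom A G"
  shows "(\<lambda>x. \<phi> x \<otimes>\<^bsub>G\<^esub> \<psi> x) \<in> hom A G"
proof -
  interpret G: comm_group G by (rule G)
  show ?thesis
    using assms(2,3) unfolding hom_def
    by (auto simp: Pi_def G.m_ac)
qed

locale dctx = lm S M for S :: "('s,'c) ring_scheme" and M :: "('s,'m) module" +
  fixes R :: "('r,'d) ring_scheme" and ract :: "'m \<Rightarrow> 'r \<Rightarrow> 'm"
  assumes ringR: "ring R" and bim: "bimodule S R M ract"
    and chih: "chi M ract \<in> ring_hom R (End_ring S M)"
begin

sublocale Er: ring E by (rule ring_E)

abbreviation "ch \<equiv> chi M ract"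

definition M' :: "('r, 'm \<Rightarrow> 'm) module" where
  "M' = \<lparr>carrier = lin_hom S M M, monoid.mult = undefined, one = undefined,
     ring.zero = \<zero>\<^bsub>E\<^esub>, ring.add = (\<oplus>\<^bsub>E\<^esub>), smult = undefined\<rparr>"
definition ract' :: "('m \<Rightarrow> 'm) \<Rightarrow> 'r \<Rightarrow> ('m \<Rightarrow> 'm)" where
  "ract' a r = a \<otimes>\<^bsub>E\<^esub> ch r"
definition N' :: "('r, 'm \<Rightarrow> 'm) module" where
  "N' = \<lparr>carrier = lin_hom S M M, monoid.mult = undefined, one = undefined,
     ring.zero = \<zero>\<^bsub>E\<^esub>, ring.add = (\<oplus>\<^bsub>E\<^esub>), smult = (\<lambda>r b. ch r \<otimes>\<^bsub>E\<^esub> b)\<rparr>"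

lemma M'_simps [simp]: "carrier M' = carrier E" "(\<oplus>\<^bsub>M'\<^esub>) = (\<oplus>\<^bsub>E\<^esub>)"
  by (simp_all add: M'_def E_carrier)
lemma N'_simps [simp]: "carrier N' = carrier E" "(\<oplus>\<^bsub>N'\<^esub>) = (\<oplus>\<^bsub>E\<^esub>)"
   "r \<odot>\<^bsub>N'\<^esub> b = ch r \<otimes>\<^bsub>E\<^esub> b"
  by (simp_all add: N'_def E_carrier)

lemma ch_closed: "r \<in> carrier R \<Longrightarrow> ch r \<in> carrier E"
  using chih by (simp add: ring_hom_closed)

sublocale TP: tctx R M' ract' N'
  by unfold_locales (auto simp: ract'_def ch_closed)

abbreviation "P \<equiv> TP.AA"
abbreviation "tP \<equiv> TP.tt"

sublocale PG: comm_group P by (rule TP.AA_comm)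

lemma L_ex: "a \<in> carrier E \<Longrightarrow> \<exists>\<phi>. \<phi> \<in> hom P P \<and> (\<forall>x\<in>carrier E. \<forall>y\<in>carrier E. \<phi> (tP x y) = tP (a \<otimes>\<^bsub>E\<^esub> x) y)"
proof -
  assume a: "a \<in> carrier E"
  obtain \<phi> where "\<phi> \<in> hom P P" "\<And>x y. \<lbrakk>x \<in> carrier M'; y \<in> carrier N'\<rbrakk> \<Longrightarrow> \<phi> (tP x y) = tP (a \<otimes>\<^bsub>E\<^esub> x) y"
  proof (rule TP.tt_universal[OF TP.AA_comm, of "\<lambda>x y. tP (a \<otimes>\<^bsub>E\<^esub> x) y"])
    show "\<And>m n. m \<in> carrier M' \<Longrightarrow> n \<in> carrier N' \<Longrightarrow> tP (a \<otimes>\<^bsub>E\<^esub> m) n \<in> carrier P"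
      using a by (intro TP.tt_closed) simp_all
    show "\<And>m m' n. m \<in> carrier M' \<Longrightarrow> m' \<in> carrier M' \<Longrightarrow> n \<in> carrier N' \<Longrightarrow>
      tP (a \<otimes>\<^bsub>E\<^esub> (m \<oplus>\<^bsub>M'\<^esub> m')) n = tP (a \<otimes>\<^bsub>E\<^esub> m) n \<otimes>\<^bsub>P\<^esub> tP (a \<otimes>\<^bsub>E\<^esub> m') n"
      using a by (simp add: Er.r_distr TP.tt_add1[simplified])
    show "\<And>m n n'. m \<in> carrier M' \<Longrightarrow> n \<in> carrier N' \<Longrightarrow> n' \<in> carrier N' \<Longrightarrow>
      tP (a \<otimes>\<^bsub>E\<^esub> m) (n \<oplus>\<^bsub>N'\<^esub> n') = tP (a \<otimes>\<^bsub>E\<^esub> m) n \<otimes>\<^bsub>P\<^esub> tP (a \<otimes>\<^bsub>E\<^esub> m) n'"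
      using a by (intro TP.tt_add2) simp_all
    show "\<And>m r n. m \<in> carrier M' \<Longrightarrow> r \<in> carrier R \<Longrightarrow> n \<in> carrier N' \<Longrightarrow>
      tP (a \<otimes>\<^bsub>E\<^esub> ract' m r) n = tP (a \<otimes>\<^bsub>E\<^esub> m) (r \<odot>\<^bsub>N'\<^esub> n)"
    proof -
      fix m r n assume h: "m \<in> carrier M'" "r \<in> carrier R" "n \<in> carrier N'"
      have "a \<otimes>\<^bsub>E\<^esub> ract' m r = ract' (a \<otimes>\<^bsub>E\<^esub> m) r"
        using a h by (simp add: ract'_def Er.m_assoc ch_closed)
      then show "tP (a \<otimes>\<^bsub>E\<^esub> ract' m r) n = tP (a \<otimes>\<^bsub>E\<^esub> m) (r \<odot>\<^bsub>N'\<^esub> n)"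
        using a h TP.tt_bal[of "a \<otimes>\<^bsub>E\<^esub> m" r n] by simp
    qed
  qed (rule that; assumption)
  then show ?thesis by auto
qed

lemma R_ex: "b \<in> carrier E \<Longrightarrow> \<exists>\<phi>. \<phi> \<in> hom P P \<and> (\<forall>x\<in>carrier E. \<forall>y\<in>carrier E. \<phi> (tP x y) = tP x (y \<otimes>\<^bsub>E\<^esub> b))"
proof -
  assume b: "b \<in> carrier E"
  obtain \<phi> where "\<phi> \<in> hom P P" "\<And>x y. \<lbrakk>x \<in> carrier M'; y \<in> carrier N'\<rbrakk> \<Longrightarrow> \<phi> (tP x y) = tP x (y \<otimes>\<^bsub>E\<^esub> b)"
  proof (rule TP.tt_universal[OF TP.AA_comm, of "\<lambda>x y. tP x (y \<otimes>\<^bsub>E\<^esub> b)"])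
    show "\<And>m n. m \<in> carrier M' \<Longrightarrow> n \<in> carrier N' \<Longrightarrow> tP m (n \<otimes>\<^bsub>E\<^esub> b) \<in> carrier P"
      using b by (intro TP.tt_closed) simp_all
    show "\<And>m m' n. m \<in> carrier M' \<Longrightarrow> m' \<in> carrier M' \<Longrightarrow> n \<in> carrier N' \<Longrightarrow>
      tP (m \<oplus>\<^bsub>M'\<^esub> m') (n \<otimes>\<^bsub>E\<^esub> b) = tP m (n \<otimes>\<^bsub>E\<^esub> b) \<otimes>\<^bsub>P\<^esub> tP m' (n \<otimes>\<^bsub>E\<^esub> b)"
      using b by (intro TP.tt_add1) simp_all
    show "\<And>m n n'. m \<in> carrier M' \<Longrightarrow> n \<in> carrier N' \<Longrightarrow> n' \<in> carrier N' \<Longrightarrow>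
      tP m ((n \<oplus>\<^bsub>N'\<^esub> n') \<otimes>\<^bsub>E\<^esub> b) = tP m (n \<otimes>\<^bsub>E\<^esub> b) \<otimes>\<^bsub>P\<^esub> tP m (n' \<otimes>\<^bsub>E\<^esub> b)"
      using b by (simp add: Er.l_distr TP.tt_add2[simplified])
    show "\<And>m r n. m \<in> carrier M' \<Longrightarrow> r \<in> carrier R \<Longrightarrow> n \<in> carrier N' \<Longrightarrow>
      tP (ract' m r) (n \<otimes>\<^bsub>E\<^esub> b) = tP m ((r \<odot>\<^bsub>N'\<^esub> n) \<otimes>\<^bsub>E\<^esub> b)"
    proof -
      fix m r n assume h: "m \<in> carrier M'" "r \<in> carrier R" "n \<in> carrier N'"
      have "(r \<odot>\<^bsub>N'\<^esub> n) \<otimes>\<^bsub>E\<^esub> b = r \<odot>\<^bsub>N'\<^esub> (n \<otimes>\<^bsub>E\<^esub> b)"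
        using b h by (simp add: Er.m_assoc ch_closed)
      then show "tP (ract' m r) (n \<otimes>\<^bsub>E\<^esub> b) = tP m ((r \<odot>\<^bsub>N'\<^esub> n) \<otimes>\<^bsub>E\<^esub> b)"
        using b h TP.tt_bal[of m r "n \<otimes>\<^bsub>E\<^esub> b"] by simp
    qed
  qed (rule that; assumption)
  then show ?thesis by auto
qed

definition L where
  "L a = (SOME \<phi>. \<phi> \<in> hom P P \<and> (\<forall>x\<in>carrier E. \<forall>y\<in>carrier E. \<phi> (tP x y) = tP (a \<otimes>\<^bsub>E\<^esub> x) y))"
definition Rt where
  "Rt b = (SOME \<phi>. \<phi> \<in> hom P P \<and> (\<forall>x\<in>carrier E. \<forall>y\<in>carrier E. \<phi> (tP x y) = tP x (y \<otimes>\<^bsub>E\<^esub> b)))"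

lemma L_hom: "a \<in> carrier E \<Longrightarrow> L a \<in> hom P P"
  and L_tP: "\<lbrakk>a \<in> carrier E; x \<in> carrier E; y \<in> carrier E\<rbrakk> \<Longrightarrow> L a (tP x y) = tP (a \<otimes>\<^bsub>E\<^esub> x) y"
  using someI_ex[OF L_ex[of a]] unfolding L_def by auto

lemma Rt_hom: "b \<in> carrier E \<Longrightarrow> Rt b \<in> hom P P"
  and Rt_tP: "\<lbrakk>b \<in> carrier E; x \<in> carrier E; y \<in> carrier E\<rbrakk> \<Longrightarrow> Rt b (tP x y) = tP x (y \<otimes>\<^bsub>E\<^esub> b)"
  using someI_ex[OF R_ex[of b]] unfolding Rt_def by auto

lemma L_closed: "\<lbrakk>a \<in> carrier E; p \<in> carrier P\<rbrakk> \<Longrightarrow> L a p \<in> carrier P"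
  by (rule hom_in_carrier[OF L_hom])
lemma Rt_closed: "\<lbrakk>b \<in> carrier E; p \<in> carrier P\<rbrakk> \<Longrightarrow> Rt b p \<in> carrier P"
  by (rule hom_in_carrier[OF Rt_hom])

lemma L_gh: "a \<in> carrier E \<Longrightarrow> group_hom P P (L a)"
  unfolding group_hom_def group_hom_axioms_def using L_hom PG.is_group by blast
lemma Rt_gh: "b \<in> carrier E \<Longrightarrow> group_hom P P (Rt b)"
  unfolding group_hom_def group_hom_axioms_def using Rt_hom PG.is_group by blast

lemma L_mult_P: "\<lbrakk>a \<in> carrier E; p \<in> carrier P; q \<in> carrier P\<rbrakk> \<Longrightarrow> L a (p \<otimes>\<^bsub>P\<^esub> q) = L a p \<otimes>\<^bsub>P\<^esub> L a q"
  by (rule group_hom.hom_mult[OF L_gh])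
lemma Rt_mult_P: "\<lbrakk>b \<in> carrier E; p \<in> carrier P; q \<in> carrier P\<rbrakk> \<Longrightarrow> Rt b (p \<otimes>\<^bsub>P\<^esub> q) = Rt b p \<otimes>\<^bsub>P\<^esub> Rt b q"
  by (rule group_hom.hom_mult[OF Rt_gh])
lemma L_one_P: "a \<in> carrier E \<Longrightarrow> L a \<one>\<^bsub>P\<^esub> = \<one>\<^bsub>P\<^esub>"
  by (rule group_hom.hom_one[OF L_gh])
lemma Rt_one_P: "b \<in> carrier E \<Longrightarrow> Rt b \<one>\<^bsub>P\<^esub> = \<one>\<^bsub>P\<^esub>"
  by (rule group_hom.hom_one[OF Rt_gh])
lemma L_inv_P: "\<lbrakk>a \<in> carrier E; p \<in> carrier P\<rbrakk> \<Longrightarrow> L a (inv\<^bsub>P\<^esub> p) = inv\<^bsub>P\<^esub> L a p"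
  by (rule group_hom.hom_inv[OF L_gh])
lemma Rt_inv_P: "\<lbrakk>b \<in> carrier E; p \<in> carrier P\<rbrakk> \<Longrightarrow> Rt b (inv\<^bsub>P\<^esub> p) = inv\<^bsub>P\<^esub> Rt b p"
  by (rule group_hom.hom_inv[OF Rt_gh])

lemma id_hom_P: "(\<lambda>p. p) \<in> hom P P"
  by (rule homI) auto

lemma comp_hom_P: "\<lbrakk>f \<in> hom P P; g \<in> hom P P\<rbrakk> \<Longrightarrow> (\<lambda>p. f (g p)) \<in> hom P P"
  using hom_compose[of g P P f P] by (simp add: comp_def)

lemma P_eq:
  assumes "\<phi> \<in> hom P P" "\<psi> \<in> hom P P"
    and "\<And>x y. \<lbrakk>x \<in> carrier E; y \<in> carrier E\<rbrakk> \<Longrightarrow> \<phi> (tP x y) = \<psi> (tP x y)"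
    and "p \<in> carrier P"
  shows "\<phi> p = \<psi> p"
  using TP.tt_hom_eq[OF PG.is_group assms(1,2) _ assms(4)] assms(3) by simp

lemma L_mult: "\<lbrakk>a \<in> carrier E; b \<in> carrier E; p \<in> carrier P\<rbrakk> \<Longrightarrow> L (a \<otimes>\<^bsub>E\<^esub> b) p = L a (L b p)"
  by (rule P_eq[OF L_hom comp_hom_P[OF L_hom L_hom]]) (simp_all add: L_tP Er.m_assoc)

lemma Rt_mult: "\<lbrakk>a \<in> carrier E; b \<in> carrier E; p \<in> carrier P\<rbrakk> \<Longrightarrow> Rt (a \<otimes>\<^bsub>E\<^esub> b) p = Rt b (Rt a p)"
  by (rule P_eq[OF Rt_hom comp_hom_P[OF Rt_hom Rt_hom]]) (simp_all add: Rt_tP Er.m_assoc)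

lemma LR_comm: "\<lbrakk>a \<in> carrier E; b \<in> carrier E; p \<in> carrier P\<rbrakk> \<Longrightarrow> L a (Rt b p) = Rt b (L a p)"
  by (rule P_eq[OF comp_hom_P[OF L_hom Rt_hom] comp_hom_P[OF Rt_hom L_hom]]) (simp_all add: Rt_tP L_tP)

lemma L_add: "\<lbrakk>a \<in> carrier E; b \<in> carrier E; p \<in> carrier P\<rbrakk> \<Longrightarrow> L (a \<oplus>\<^bsub>E\<^esub> b) p = L a p \<otimes>\<^bsub>P\<^esub> L b p"
  by (rule P_eq[OF L_hom hom_mult_pointwise[OF TP.AA_comm L_hom L_hom]])
     (simp_all add: L_tP Er.l_distr TP.tt_add1[simplified])

lemma Rt_add: "\<lbrakk>a \<in> carrier E; b \<in> carrier E; p \<in> carrier P\<rbrakk> \<Longrightarrow> Rt (a \<oplus>\<^bsub>E\<^esub> b) p = Rt a p \<otimes>\<^bsub>P\<^esub> Rt b p"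
  by (rule P_eq[OF Rt_hom hom_mult_pointwise[OF TP.AA_comm Rt_hom Rt_hom]])
     (simp_all add: Rt_tP Er.r_distr TP.tt_add2[simplified])

lemma L_one: "p \<in> carrier P \<Longrightarrow> L \<one>\<^bsub>E\<^esub> p = p"
  by (rule P_eq[OF L_hom id_hom_P]) (simp_all add: L_tP)

lemma Rt_one: "p \<in> carrier P \<Longrightarrow> Rt \<one>\<^bsub>E\<^esub> p = p"
  by (rule P_eq[OF Rt_hom id_hom_P]) (simp_all add: Rt_tP)

definition T' :: "(('m \<Rightarrow> 'm) \<times> ((('m \<Rightarrow> 'm) \<times> ('m \<Rightarrow> 'm)) \<Rightarrow>\<^sub>0 int) set) ring" where
  "T' = \<lparr>carrier = carrier E \<times> carrier P,
     monoid.mult = (\<lambda>x y. (fst x \<otimes>\<^bsub>E\<^esub> fst y, L (fst x) (snd y) \<otimes>\<^bsub>P\<^esub> Rt (fst y) (snd x))),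
     one = (\<one>\<^bsub>E\<^esub>, \<one>\<^bsub>P\<^esub>),
     ring.zero = (\<zero>\<^bsub>E\<^esub>, \<one>\<^bsub>P\<^esub>),
     ring.add = (\<lambda>x y. (fst x \<oplus>\<^bsub>E\<^esub> fst y, snd x \<otimes>\<^bsub>P\<^esub> snd y))\<rparr>"

lemma T'_simps:
  "carrier T' = carrier E \<times> carrier P"
  "(a, p) \<otimes>\<^bsub>T'\<^esub> (b, q) = (a \<otimes>\<^bsub>E\<^esub> b, L a q \<otimes>\<^bsub>P\<^esub> Rt b p)"
  "\<one>\<^bsub>T'\<^esub> = (\<one>\<^bsub>E\<^esub>, \<one>\<^bsub>P\<^esub>)"
  "\<zero>\<^bsub>T'\<^esub> = (\<zero>\<^bsub>E\<^esub>, \<one>\<^bsub>P\<^esub>)"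
  "(a, p) \<oplus>\<^bsub>T'\<^esub> (b, q) = (a \<oplus>\<^bsub>E\<^esub> b, p \<otimes>\<^bsub>P\<^esub> q)"
  by (simp_all add: T'_def)

lemma ring_T': "ring T'"
proof (rule ringI)
  show "abelian_group T'"
  proof (rule abelian_groupI)
    fix x y z assume h: "x \<in> carrier T'" "y \<in> carrier T'" "z \<in> carrier T'"
    obtain a p where x: "x = (a, p)" "a \<in> carrier E" "p \<in> carrier P" using h(1) by (auto simp: T'_simps)
    obtain b q where y: "y = (b, q)" "b \<in> carrier E" "q \<in> carrier P" using h(2) by (auto simp: T'_simps)
    obtain c r where z: "z = (c, r)" "c \<in> carrier E" "r \<in> carrier P" using h(3) by (auto simp: T'_simps)
    show "x \<oplus>\<^bsub>T'\<^esub> y \<in> carrier T'" using x y by (simp add: T'_simps)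
    show "x \<oplus>\<^bsub>T'\<^esub> y \<oplus>\<^bsub>T'\<^esub> z = x \<oplus>\<^bsub>T'\<^esub> (y \<oplus>\<^bsub>T'\<^esub> z)"
      using x y z by (simp add: T'_simps Er.a_assoc PG.m_assoc)
    show "x \<oplus>\<^bsub>T'\<^esub> y = y \<oplus>\<^bsub>T'\<^esub> x"
      using x y by (simp add: T'_simps Er.a_comm PG.m_comm)
  next
    show "\<zero>\<^bsub>T'\<^esub> \<in> carrier T'" by (simp add: T'_simps)
  next
    fix x assume h: "x \<in> carrier T'"
    obtain a p where x: "x = (a, p)" "a \<in> carrier E" "p \<in> carrier P" using h by (auto simp: T'_simps)
    show "\<zero>\<^bsub>T'\<^esub> \<oplus>\<^bsub>T'\<^esub> x = x" using x by (simp add: T'_simps)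
    show "\<exists>y\<in>carrier T'. y \<oplus>\<^bsub>T'\<^esub> x = \<zero>\<^bsub>T'\<^esub>"
      using x by (intro bexI[of _ "(\<ominus>\<^bsub>E\<^esub> a, inv\<^bsub>P\<^esub> p)"]) (simp_all add: T'_simps Er.l_neg)
  qed
next
  show "monoid T'"
  proof (rule monoidI)
    fix x y z assume h: "x \<in> carrier T'" "y \<in> carrier T'" "z \<in> carrier T'"
    obtain a p where x: "x = (a, p)" "a \<in> carrier E" "p \<in> carrier P" using h(1) by (auto simp: T'_simps)
    obtain b q where y: "y = (b, q)" "b \<in> carrier E" "q \<in> carrier P" using h(2) by (auto simp: T'_simps)
    obtain c r where z: "z = (c, r)" "c \<in> carrier E" "r \<in> carrier P" using h(3) by (auto simp: T'_simps)
    show "x \<otimes>\<^bsub>T'\<^esub> y \<in> carrier T'" using x y by (simp add: T'_simps L_closed Rt_closed)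
    have "L (a \<otimes>\<^bsub>E\<^esub> b) r \<otimes>\<^bsub>P\<^esub> Rt c (L a q \<otimes>\<^bsub>P\<^esub> Rt b p) =
          L a (L b r \<otimes>\<^bsub>P\<^esub> Rt c q) \<otimes>\<^bsub>P\<^esub> Rt (b \<otimes>\<^bsub>E\<^esub> c) p"
      using x y z
      by (simp add: L_mult Rt_mult L_mult_P Rt_mult_P L_closed Rt_closed LR_comm PG.m_assoc)
    then show "x \<otimes>\<^bsub>T'\<^esub> y \<otimes>\<^bsub>T'\<^esub> z = x \<otimes>\<^bsub>T'\<^esub> (y \<otimes>\<^bsub>T'\<^esub> z)"
      using x y z by (simp add: T'_simps Er.m_assoc)
  next
    show "\<one>\<^bsub>T'\<^esub> \<in> carrier T'" by (simp add: T'_simps)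
  next
    fix x assume h: "x \<in> carrier T'"
    obtain a p where x: "x = (a, p)" "a \<in> carrier E" "p \<in> carrier P" using h by (auto simp: T'_simps)
    show "\<one>\<^bsub>T'\<^esub> \<otimes>\<^bsub>T'\<^esub> x = x" using x by (simp add: T'_simps L_one Rt_one_P)
    show "x \<otimes>\<^bsub>T'\<^esub> \<one>\<^bsub>T'\<^esub> = x" using x by (simp add: T'_simps Rt_one L_one_P)
  qed
next
  fix x y z assume h: "x \<in> carrier T'" "y \<in> carrier T'" "z \<in> carrier T'"
  obtain a p where x: "x = (a, p)" "a \<in> carrier E" "p \<in> carrier P" using h(1) by (auto simp: T'_simps)
  obtain b q where y: "y = (b, q)" "b \<in> carrier E" "q \<in> carrier P" using h(2) by (auto simp: T'_simps)
  obtain c r where z: "z = (c, r)" "c \<in> carrier E" "r \<in> carrier P" using h(3) by (auto simp: T'_simps)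
  have "L (a \<oplus>\<^bsub>E\<^esub> b) r \<otimes>\<^bsub>P\<^esub> Rt c (p \<otimes>\<^bsub>P\<^esub> q) =
        (L a r \<otimes>\<^bsub>P\<^esub> Rt c p) \<otimes>\<^bsub>P\<^esub> (L b r \<otimes>\<^bsub>P\<^esub> Rt c q)"
    using x y z by (simp add: L_add Rt_mult_P L_closed Rt_closed PG.m_ac)
  then show "(x \<oplus>\<^bsub>T'\<^esub> y) \<otimes>\<^bsub>T'\<^esub> z = x \<otimes>\<^bsub>T'\<^esub> z \<oplus>\<^bsub>T'\<^esub> y \<otimes>\<^bsub>T'\<^esub> z"
    using x y z by (simp add: T'_simps Er.l_distr)
  have "L c (p \<otimes>\<^bsub>P\<^esub> q) \<otimes>\<^bsub>P\<^esub> Rt (a \<oplus>\<^bsub>E\<^esub> b) r =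
        (L c p \<otimes>\<^bsub>P\<^esub> Rt a r) \<otimes>\<^bsub>P\<^esub> (L c q \<otimes>\<^bsub>P\<^esub> Rt b r)"
    using x y z by (simp add: Rt_add L_mult_P L_closed Rt_closed PG.m_ac)
  then show "z \<otimes>\<^bsub>T'\<^esub> (x \<oplus>\<^bsub>T'\<^esub> y) = z \<otimes>\<^bsub>T'\<^esub> x \<oplus>\<^bsub>T'\<^esub> z \<otimes>\<^bsub>T'\<^esub> y"
    using x y z by (simp add: T'_simps Er.r_distr)
qed

definition dd where "dd e = tP e \<one>\<^bsub>E\<^esub> \<otimes>\<^bsub>P\<^esub> inv\<^bsub>P\<^esub> tP \<one>\<^bsub>E\<^esub> e"

lemma tP_closed: "\<lbrakk>x \<in> carrier E; y \<in> carrier E\<rbrakk> \<Longrightarrow> tP x y \<in> carrier P"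
  by (rule TP.tt_closed) simp_all

lemma dd_closed: "e \<in> carrier E \<Longrightarrow> dd e \<in> carrier P"
  by (simp add: dd_def tP_closed)

lemma gd_hom: "(\<lambda>e. (e, \<one>\<^bsub>P\<^esub>)) \<in> ring_hom E T'"
  by (rule ring_hom_memI) (simp_all add: T'_simps L_one_P Rt_one_P)

lemma hd_hom: "(\<lambda>e. (e, dd e)) \<in> ring_hom E T'"
proof (rule ring_hom_memI)
  fix x y assume xy: "x \<in> carrier E" "y \<in> carrier E"
  show "(x \<otimes>\<^bsub>E\<^esub> y, dd (x \<otimes>\<^bsub>E\<^esub> y)) = (x, dd x) \<otimes>\<^bsub>T'\<^esub> (y, dd y)"
  proof -
    have "L x (dd y) \<otimes>\<^bsub>P\<^esub> Rt y (dd x) =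
      (tP (x \<otimes>\<^bsub>E\<^esub> y) \<one>\<^bsub>E\<^esub> \<otimes>\<^bsub>P\<^esub> inv\<^bsub>P\<^esub> tP x y) \<otimes>\<^bsub>P\<^esub> (tP x y \<otimes>\<^bsub>P\<^esub> inv\<^bsub>P\<^esub> tP \<one>\<^bsub>E\<^esub> (x \<otimes>\<^bsub>E\<^esub> y))"
      using xy by (simp add: dd_def L_mult_P Rt_mult_P L_inv_P Rt_inv_P tP_closed L_tP Rt_tP)
    also have "\<dots> = dd (x \<otimes>\<^bsub>E\<^esub> y)"
      using xy by (simp add: dd_def tP_closed PG.m_assoc[symmetric]) (simp add: PG.m_assoc tP_closed)
    finally show ?thesis by (simp add: T'_simps)
  qed
next
  fix x y assume xy: "x \<in> carrier E" "y \<in> carrier E"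
  have "dd (x \<oplus>\<^bsub>E\<^esub> y) = dd x \<otimes>\<^bsub>P\<^esub> dd y"
    using xy by (simp add: dd_def TP.tt_add1[simplified] TP.tt_add2[simplified] tP_closed PG.inv_mult PG.m_ac)
  then show "(x \<oplus>\<^bsub>E\<^esub> y, dd (x \<oplus>\<^bsub>E\<^esub> y)) = (x, dd x) \<oplus>\<^bsub>T'\<^esub> (y, dd y)" by (simp add: T'_simps)
next
  show "(\<one>\<^bsub>E\<^esub>, dd \<one>\<^bsub>E\<^esub>) = \<one>\<^bsub>T'\<^esub>" by (simp add: T'_simps dd_def tP_closed)
qed (simp add: T'_simps dd_closed)

lemma dd_ch: "r \<in> carrier R \<Longrightarrow> dd (ch r) = \<one>\<^bsub>P\<^esub>"
proof -
  assume r: "r \<in> carrier R"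
  have "tP (ch r) \<one>\<^bsub>E\<^esub> = tP (ract' \<one>\<^bsub>E\<^esub> r) \<one>\<^bsub>E\<^esub>" using r by (simp add: ract'_def ch_closed)
  also have "\<dots> = tP \<one>\<^bsub>E\<^esub> (r \<odot>\<^bsub>N'\<^esub> \<one>\<^bsub>E\<^esub>)" using r by (intro TP.tt_bal) simp_all
  also have "\<dots> = tP \<one>\<^bsub>E\<^esub> (ch r)" using r by (simp add: ch_closed)
  finally show ?thesis using r by (simp add: dd_def tP_closed ch_closed)
qed

definition rep :: "((('m \<Rightarrow> 'm) \<times> ('m \<Rightarrow> 'm)) \<Rightarrow>\<^sub>0 int) set \<Rightarrow> (('m \<Rightarrow> 'm) \<times> ('m \<Rightarrow> 'm)) \<Rightarrow>\<^sub>0 int"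
  where "rep c = (SOME p. p \<in> c)"

lemma rep_coset: "c \<in> carrier P \<Longrightarrow> rep c \<in> c \<and> c = TP.KK #>\<^bsub>TP.FF\<^esub> rep c"
proof -
  assume c: "c \<in> carrier P"
  then obtain x where x: "x \<in> carrier TP.FF" "c = TP.KK #>\<^bsub>TP.FF\<^esub> x" using TP.carrier_AA by blast
  have "x \<in> c" using x group.rcos_self[OF TP.FF_group x(1) TP.KK_sub] by simp
  then have r: "rep c \<in> c" unfolding rep_def by (rule someI)
  have "c = TP.KK #>\<^bsub>TP.FF\<^esub> rep c"
    using x r group.repr_independence[OF TP.FF_group _ x(1) TP.KK_sub] by simp
  then show ?thesis using r by simp
qed

lemma rep_inj: "\<lbrakk>c \<in> carrier P; c' \<in> carrier P; rep c = rep c'\<rbrakk> \<Longrightarrow> c = c'"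
proof -
  assume h: "c \<in> carrier P" "c' \<in> carrier P" "rep c = rep c'"
  have "c = TP.KK #>\<^bsub>TP.FF\<^esub> rep c" using rep_coset[OF h(1)] by (rule conjunct2)
  also have "\<dots> = TP.KK #>\<^bsub>TP.FF\<^esub> rep c'" using h(3) by simp
  also have "\<dots> = c'" using conjunct2[OF rep_coset[OF h(2)]] by (rule sym)
  finally show ?thesis .
qed

definition iota :: "('m \<Rightarrow> 'm) \<times> ((('m \<Rightarrow> 'm) \<times> ('m \<Rightarrow> 'm)) \<Rightarrow>\<^sub>0 int) set \<Rightarrow> (('m \<Rightarrow> 'm) \<times> nat) set"
  where "iota x = enc (fst x) (rep (snd x))"

lemma iota_inj: "inj_on iota (carrier T')"
proof (rule inj_onI)
  fix x y assume h: "x \<in> carrier T'" "y \<in> carrier T'" "iota x = iota y"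
  then have "enc (fst x) (rep (snd x)) = enc (fst y) (rep (snd y))" by (simp add: iota_def)
  then have "fst x = fst y \<and> rep (snd x) = rep (snd y)" by (rule enc_inj)
  moreover have "snd x \<in> carrier P" "snd y \<in> carrier P" using h by (auto simp: T'_simps)
  ultimately show "x = y" using rep_inj by (simp add: prod_eq_iff)
qed

definition Tx :: "(('m \<Rightarrow> 'm) \<times> nat) set ring" where
  "Tx = \<lparr>carrier = iota ` carrier T',
     monoid.mult = (\<lambda>x y. iota (inv_into (carrier T') iota x \<otimes>\<^bsub>T'\<^esub> inv_into (carrier T') iota y)),
     one = iota \<one>\<^bsub>T'\<^esub>, ring.zero = iota \<zero>\<^bsub>T'\<^esub>,
     ring.add = (\<lambda>x y. iota (inv_into (carrier T') iota x \<oplus>\<^bsub>T'\<^esub> inv_into (carrier T') iota y))\<rparr>"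

lemma iota_hom: "iota \<in> ring_hom T' Tx"
  by (rule ring_hom_memI) (simp_all add: Tx_def inv_into_f_f[OF iota_inj])

lemma ring_Tx: "ring Tx"
proof -
  have "ring (Tx\<lparr>carrier := iota ` carrier T', zero := iota \<zero>\<^bsub>T'\<^esub>\<rparr>)"
    by (rule ring.ring_hom_imp_img_ring[OF ring_T' iota_hom])
  moreover have "Tx\<lparr>carrier := iota ` carrier T', zero := iota \<zero>\<^bsub>T'\<^esub>\<rparr> = Tx" by (simp add: Tx_def)
  ultimately show ?thesis by simp
qed

lemma dominion:
  assumes epi: "ring_epi R E ch TYPE((('m \<Rightarrow> 'm) \<times> nat) set)" and e: "e \<in> carrier E"
  shows "tP e \<one>\<^bsub>E\<^esub> = tP \<one>\<^bsub>E\<^esub> e"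
proof -
  have g: "iota \<circ> (\<lambda>e. (e, \<one>\<^bsub>P\<^esub>)) \<in> ring_hom E Tx" by (rule ring_hom_trans[OF gd_hom iota_hom])
  have h: "iota \<circ> (\<lambda>e. (e, dd e)) \<in> ring_hom E Tx" by (rule ring_hom_trans[OF hd_hom iota_hom])
  have agree: "\<forall>a\<in>carrier R. (iota \<circ> (\<lambda>e. (e, \<one>\<^bsub>P\<^esub>))) (ch a) = (iota \<circ> (\<lambda>e. (e, dd e))) (ch a)"
    by (simp add: dd_ch)
  have ep: "\<forall>T :: (('m \<Rightarrow> 'm) \<times> nat) set ring. ring T \<longrightarrow>
        (\<forall>g\<in>ring_hom E T. \<forall>h\<in>ring_hom E T.
           (\<forall>a\<in>carrier R. g (ch a) = h (ch a)) \<longrightarrow> (\<forall>b\<in>carrier E. g b = h b))"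
    using epi unfolding ring_epi_def by (rule conjunct2)
  have "\<forall>b\<in>carrier E. (iota \<circ> (\<lambda>e. (e, \<one>\<^bsub>P\<^esub>))) b = (iota \<circ> (\<lambda>e. (e, dd e))) b"
    using mp[OF spec[OF ep, of Tx] ring_Tx] g h agree by blast
  then have "iota (e, \<one>\<^bsub>P\<^esub>) = iota (e, dd e)" using e by simp
  then have "(e, \<one>\<^bsub>P\<^esub>) = (e, dd e)"
    by (rule inj_onD[OF iota_inj]) (simp_all add: T'_simps e dd_closed)
  then have d1: "tP e \<one>\<^bsub>E\<^esub> \<otimes>\<^bsub>P\<^esub> inv\<^bsub>P\<^esub> tP \<one>\<^bsub>E\<^esub> e = \<one>\<^bsub>P\<^esub>" by (simp add: dd_def)
  have "inv\<^bsub>P\<^esub> (inv\<^bsub>P\<^esub> tP \<one>\<^bsub>E\<^esub> e) = tP e \<one>\<^bsub>E\<^esub>"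
    by (rule PG.inv_equality[OF d1]) (simp_all add: tP_closed e)
  then show ?thesis using e by (simp add: tP_closed)
qed

end


context tctx begin

lemma tt_zero1:
  assumes "z \<in> carrier M" "z \<oplus>\<^bsub>M\<^esub> z = z" "n \<in> carrier N"
  shows "tt z n = \<one>\<^bsub>AA\<^esub>"
proof -
  interpret AG: group AA by (rule AA_group)
  have "tt z n \<otimes>\<^bsub>AA\<^esub> tt z n = tt z n" using tt_add1[of z z n] assms by simp
  then show ?thesis using AG.l_cancel_one[of "tt z n" "tt z n"] tt_closed assms by simp
qed

lemma tt_neg1:
  assumes "m \<in> carrier M" "m' \<in> carrier M" "z \<in> carrier M" "m \<oplus>\<^bsub>M\<^esub> m' = z" "z \<oplus>\<^bsub>M\<^esub> z = z" "n \<in> carrier N"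
  shows "tt m' n = inv\<^bsub>AA\<^esub> tt m n"
proof -
  interpret AG: group AA by (rule AA_group)
  have "tt m n \<otimes>\<^bsub>AA\<^esub> tt m' n = \<one>\<^bsub>AA\<^esub>" using tt_add1[of m m' n] tt_zero1[of z n] assms by simp
  then show ?thesis using AG.inv_equality[of "tt m n" "tt m' n"] tt_closed assms
    by (metis AG.inv_inv)
qed

end

lemma hom_inv_pointwise:
  assumes G: "comm_group G" and "\<phi> \<in> hom A G"
  shows "(\<lambda>x. inv\<^bsub>G\<^esub> \<phi> x) \<in> hom A G"
proof -
  interpret G: comm_group G by (rule G)
  show ?thesis
    using assms(2) unfolding hom_def
    by (auto simp: Pi_def G.inv_mult)
qed

locale fctx = dctx S M R ract + Q: lm S Q
  for S :: "('s,'c) ring_scheme" and M :: "('s,'m) module" and R :: "('r,'d) ring_scheme"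
    and ract :: "'m \<Rightarrow> 'r \<Rightarrow> 'm" and Q :: "('s,'q) module" +
  assumes epi: "ring_epi R (End_ring S M) (chi M ract) TYPE((('m \<Rightarrow> 'm) \<times> nat) set)"
begin

abbreviation "H \<equiv> Hom_module R S M ract Q"

lemma ract_closed: "\<lbrakk>m \<in> carrier M; r \<in> carrier R\<rbrakk> \<Longrightarrow> ract m r \<in> carrier M"
  using bim by (simp add: bimodule_def right_action_axioms_def)
lemma ract_add1: "\<lbrakk>m \<in> carrier M; m' \<in> carrier M; r \<in> carrier R\<rbrakk> \<Longrightarrow>
   ract (m \<oplus>\<^bsub>M\<^esub> m') r = ract m r \<oplus>\<^bsub>M\<^esub> ract m' r"
  using bim by (simp add: bimodule_def right_action_axioms_def)
lemma ract_smult: "\<lbrakk>s \<in> carrier S; m \<in> carrier M; r \<in> carrier R\<rbrakk> \<Longrightarrow>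
   ract (s \<odot>\<^bsub>M\<^esub> m) r = s \<odot>\<^bsub>M\<^esub> ract m r"
  using bim by (simp add: bimodule_def)

lemma H_simps:
  "carrier H = lin_hom S M Q"
  "f \<oplus>\<^bsub>H\<^esub> g = (\<lambda>m\<in>carrier M. f m \<oplus>\<^bsub>Q\<^esub> g m)"
  "r \<odot>\<^bsub>H\<^esub> f = (\<lambda>m\<in>carrier M. f (ract m r))"
  by (simp_all add: Hom_module_def)

lemma H_add_closed: "\<lbrakk>f \<in> lin_hom S M Q; g \<in> lin_hom S M Q\<rbrakk> \<Longrightarrow> (\<lambda>m\<in>carrier M. f m \<oplus>\<^bsub>Q\<^esub> g m) \<in> lin_hom S M Q"
  apply (rule lin_homI)
  apply (auto simp: lin_homD Q.smult_r_distr smult_closed)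
  by (simp add: Q.M.a_ac lin_homD)

lemma H_smult_closed: "\<lbrakk>f \<in> lin_hom S M Q; r \<in> carrier R\<rbrakk> \<Longrightarrow> (\<lambda>m\<in>carrier M. f (ract m r)) \<in> lin_hom S M Q"
  by (rule lin_homI) (auto simp: lin_homD ract_closed ract_add1 ract_smult smult_closed)

sublocale TA: tctx R M ract H
  by unfold_locales (auto simp: H_simps H_add_closed H_smult_closed ract_closed)

abbreviation "A \<equiv> TA.AA"
abbreviation "tA \<equiv> TA.tt"

sublocale AG: comm_group A by (rule TA.AA_comm)

definition act :: "('m \<Rightarrow> 'm) \<Rightarrow> ('m \<Rightarrow> 'q) \<Rightarrow> ('m \<Rightarrow> 'q)" where
  "act e f = (\<lambda>m\<in>carrier M. f (e m))"

lemma act_closed: "\<lbrakk>e \<in> lin_hom S M M; f \<in> lin_hom S M Q\<rbrakk> \<Longrightarrow> act e f \<in> lin_hom S M Q"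
  unfolding act_def by (rule lin_homI) (auto simp: lin_homD smult_closed)

lemma bal_E:
  assumes x: "x \<in> carrier M" and e: "e \<in> carrier E" and f: "f \<in> lin_hom S M Q"
  shows "tA (e x) f = tA x (act e f)"
proof -
  obtain \<Phi> where \<Phi>: "\<Phi> \<in> hom P A"
    "\<And>a b. \<lbrakk>a \<in> carrier M'; b \<in> carrier N'\<rbrakk> \<Longrightarrow> \<Phi> (tP a b) = tA (a x) (act b f)"
  proof (rule TP.tt_universal[OF TA.AA_comm, of "\<lambda>a b. tA (a x) (act b f)"])
    show "\<And>m n. m \<in> carrier M' \<Longrightarrow> n \<in> carrier N' \<Longrightarrow> tA (m x) (act n f) \<in> carrier A"
      using x f by (intro TA.tt_closed) (auto simp: E_carrier lin_homD H_simps act_closed)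
    show "\<And>m m' n. m \<in> carrier M' \<Longrightarrow> m' \<in> carrier M' \<Longrightarrow> n \<in> carrier N' \<Longrightarrow>
      tA ((m \<oplus>\<^bsub>M'\<^esub> m') x) (act n f) = tA (m x) (act n f) \<otimes>\<^bsub>A\<^esub> tA (m' x) (act n f)"
      using x f by (simp add: E_add E_carrier) (intro TA.tt_add1, auto simp: lin_homD H_simps act_closed)
    show "\<And>m n n'. m \<in> carrier M' \<Longrightarrow> n \<in> carrier N' \<Longrightarrow> n' \<in> carrier N' \<Longrightarrow>
      tA (m x) (act (n \<oplus>\<^bsub>N'\<^esub> n') f) = tA (m x) (act n f) \<otimes>\<^bsub>A\<^esub> tA (m x) (act n' f)"
    proof -
      fix m n n' assume h: "m \<in> carrier M'" "n \<in> carrier N'" "n' \<in> carrier N'"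
      have "act (n \<oplus>\<^bsub>N'\<^esub> n') f = act n f \<oplus>\<^bsub>H\<^esub> act n' f"
        using h f by (auto simp: act_def E_add E_carrier H_simps lin_homD intro!: restrict_ext)
      moreover have c: "m x \<in> carrier M" "act n f \<in> carrier H" "act n' f \<in> carrier H"
        using h f x by (auto simp: E_carrier lin_homD H_simps act_closed)
      ultimately show "tA (m x) (act (n \<oplus>\<^bsub>N'\<^esub> n') f) = tA (m x) (act n f) \<otimes>\<^bsub>A\<^esub> tA (m x) (act n' f)"
        using TA.tt_add2[OF c] by simp
    qed
    show "\<And>m r n. m \<in> carrier M' \<Longrightarrow> r \<in> carrier R \<Longrightarrow> n \<in> carrier N' \<Longrightarrow>
      tA (ract' m r x) (act n f) = tA (m x) (act (r \<odot>\<^bsub>N'\<^esub> n) f)"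
    proof -
      fix m r n assume h: "m \<in> carrier M'" "r \<in> carrier R" "n \<in> carrier N'"
      have 1: "ract' m r x = ract (m x) r"
        using h x by (simp add: ract'_def E_mult chi_def E_carrier lin_homD)
      have 2: "act (r \<odot>\<^bsub>N'\<^esub> n) f = r \<odot>\<^bsub>H\<^esub> act n f"
        using h f by (auto simp: act_def E_mult chi_def H_simps ract_closed intro!: restrict_ext)
      show "tA (ract' m r x) (act n f) = tA (m x) (act (r \<odot>\<^bsub>N'\<^esub> n) f)"
        unfolding 1 2 using h f x
        by (intro TA.tt_bal) (auto simp: E_carrier lin_homD H_simps act_closed)
    qed
  qed (rule that; assumption)
  have "tP e \<one>\<^bsub>E\<^esub> = tP \<one>\<^bsub>E\<^esub> e" by (rule dominion[OF epi e])
  then have "\<Phi> (tP e \<one>\<^bsub>E\<^esub>) = \<Phi> (tP \<one>\<^bsub>E\<^esub> e)" by simp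
  then have "tA (e x) (act \<one>\<^bsub>E\<^esub> f) = tA (\<one>\<^bsub>E\<^esub> x) (act e f)" using e by (simp add: \<Phi>(2))
  moreover have "act \<one>\<^bsub>E\<^esub> f = f" using f by (simp add: act_def E_one lin_restrict cong: restrict_cong)
  moreover have "\<one>\<^bsub>E\<^esub> x = x" using x by (simp add: E_one)
  ultimately show ?thesis by simp
qed

lemma eps_ex: "\<exists>\<epsilon>. \<epsilon> \<in> hom A (add_monoid Q) \<and> (\<forall>m\<in>carrier M. \<forall>f\<in>lin_hom S M Q. \<epsilon> (tA m f) = f m)"
proof -
  obtain \<epsilon> where "\<epsilon> \<in> hom A (add_monoid Q)" "\<And>m f. \<lbrakk>m \<in> carrier M; f \<in> carrier H\<rbrakk> \<Longrightarrow> \<epsilon> (tA m f) = f m"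
  proof (rule TA.tt_universal[OF Q.M.a_comm_group, of "\<lambda>m f. f m"])
    show "\<And>m n. m \<in> carrier M \<Longrightarrow> n \<in> carrier H \<Longrightarrow> n m \<in> carrier (add_monoid Q)"
      by (simp add: H_simps lin_homD)
    show "\<And>m m' n. m \<in> carrier M \<Longrightarrow> m' \<in> carrier M \<Longrightarrow> n \<in> carrier H \<Longrightarrow>
       n (m \<oplus>\<^bsub>M\<^esub> m') = n m \<otimes>\<^bsub>add_monoid Q\<^esub> n m'"
      by (simp add: H_simps lin_homD)
    show "\<And>m n n'. m \<in> carrier M \<Longrightarrow> n \<in> carrier H \<Longrightarrow> n' \<in> carrier H \<Longrightarrow>
       (n \<oplus>\<^bsub>H\<^esub> n') m = n m \<otimes>\<^bsub>add_monoid Q\<^esub> n' m"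
      by (simp add: H_simps)
    show "\<And>m r n. m \<in> carrier M \<Longrightarrow> r \<in> carrier R \<Longrightarrow> n \<in> carrier H \<Longrightarrow> n (ract m r) = (r \<odot>\<^bsub>H\<^esub> n) m"
      by (simp add: H_simps)
  qed (rule that; assumption)
  then show ?thesis by (auto simp: H_simps)
qed

definition eps where
  "eps = (SOME \<epsilon>. \<epsilon> \<in> hom A (add_monoid Q) \<and> (\<forall>m\<in>carrier M. \<forall>f\<in>lin_hom S M Q. \<epsilon> (tA m f) = f m))"

lemma eps_hom: "eps \<in> hom A (add_monoid Q)"
  and eps_tA: "\<lbrakk>m \<in> carrier M; f \<in> lin_hom S M Q\<rbrakk> \<Longrightarrow> eps (tA m f) = f m"
  using someI_ex[OF eps_ex] unfolding eps_def by auto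

lemma eps_gh: "group_hom A (add_monoid Q) eps"
  unfolding group_hom_def group_hom_axioms_def using eps_hom AG.is_group Q.M.a_group by blast

definition Good where
  "Good s \<longleftrightarrow> (\<exists>\<theta>. \<theta> \<in> hom (add_monoid Q) A \<and>
      (\<forall>m\<in>carrier M. \<forall>f\<in>lin_hom S M Q. \<theta> (f m) = tA (s \<odot>\<^bsub>M\<^esub> m) f) \<and>
      (\<forall>q\<in>carrier Q. eps (\<theta> q) = s \<odot>\<^bsub>Q\<^esub> q))"

lemma Good_zero: "Good \<zero>\<^bsub>S\<^esub>"
  unfolding Good_def
proof (intro exI conjI ballI)
  show "(\<lambda>q. \<one>\<^bsub>A\<^esub>) \<in> hom (add_monoid Q) A" by (rule homI) simp_all
  fix m f assume mf: "m \<in> carrier M" "f \<in> lin_hom S M Q"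
  show "\<one>\<^bsub>A\<^esub> = tA (\<zero>\<^bsub>S\<^esub> \<odot>\<^bsub>M\<^esub> m) f"
    using mf by (simp add: smult_zero TA.tt_zero1 H_simps)
next
  fix q assume q: "q \<in> carrier Q"
  show "eps \<one>\<^bsub>A\<^esub> = \<zero>\<^bsub>S\<^esub> \<odot>\<^bsub>Q\<^esub> q"
    using group_hom.hom_one[OF eps_gh] q by (simp add: Q.smult_zero)
qed

lemma Good_add:
  assumes a: "a \<in> carrier S" "Good a" and b: "b \<in> carrier S" "Good b"
  shows "Good (a \<oplus>\<^bsub>S\<^esub> b)"
proof -
  obtain \<theta>1 where t1: "\<theta>1 \<in> hom (add_monoid Q) A"
      "\<forall>m\<in>carrier M. \<forall>f\<in>lin_hom S M Q. \<theta>1 (f m) = tA (a \<odot>\<^bsub>M\<^esub> m) f"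
      "\<forall>q\<in>carrier Q. eps (\<theta>1 q) = a \<odot>\<^bsub>Q\<^esub> q" using a(2) unfolding Good_def by blast
  obtain \<theta>2 where t2: "\<theta>2 \<in> hom (add_monoid Q) A"
      "\<forall>m\<in>carrier M. \<forall>f\<in>lin_hom S M Q. \<theta>2 (f m) = tA (b \<odot>\<^bsub>M\<^esub> m) f"
      "\<forall>q\<in>carrier Q. eps (\<theta>2 q) = b \<odot>\<^bsub>Q\<^esub> q" using b(2) unfolding Good_def by blast
  show ?thesis unfolding Good_def
  proof (intro exI conjI ballI)
    show "(\<lambda>q. \<theta>1 q \<otimes>\<^bsub>A\<^esub> \<theta>2 q) \<in> hom (add_monoid Q) A"
      by (rule hom_mult_pointwise[OF TA.AA_comm t1(1) t2(1)])
    fix m f assume mf: "m \<in> carrier M" "f \<in> lin_hom S M Q"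
    show "\<theta>1 (f m) \<otimes>\<^bsub>A\<^esub> \<theta>2 (f m) = tA ((a \<oplus>\<^bsub>S\<^esub> b) \<odot>\<^bsub>M\<^esub> m) f"
      using mf a b t1(2) t2(2) by (simp add: smult_l_distr TA.tt_add1 smult_closed H_simps)
  next
    fix q assume q: "q \<in> carrier Q"
    have c: "\<theta>1 q \<in> carrier A" "\<theta>2 q \<in> carrier A" using q t1(1) t2(1) hom_in_carrier by fastforce+
    show "eps (\<theta>1 q \<otimes>\<^bsub>A\<^esub> \<theta>2 q) = (a \<oplus>\<^bsub>S\<^esub> b) \<odot>\<^bsub>Q\<^esub> q"
      using group_hom.hom_mult[OF eps_gh c] q a b t1(3) t2(3) by (simp add: Q.smult_l_distr)
  qed
qed

lemma Good_neg:
  assumes a: "a \<in> carrier S" "Good a"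
  shows "Good (\<ominus>\<^bsub>S\<^esub> a)"
proof -
  obtain \<theta>1 where t1: "\<theta>1 \<in> hom (add_monoid Q) A"
      "\<forall>m\<in>carrier M. \<forall>f\<in>lin_hom S M Q. \<theta>1 (f m) = tA (a \<odot>\<^bsub>M\<^esub> m) f"
      "\<forall>q\<in>carrier Q. eps (\<theta>1 q) = a \<odot>\<^bsub>Q\<^esub> q" using a(2) unfolding Good_def by blast
  show ?thesis unfolding Good_def
  proof (intro exI conjI ballI)
    show "(\<lambda>q. inv\<^bsub>A\<^esub> \<theta>1 q) \<in> hom (add_monoid Q) A"
      by (rule hom_inv_pointwise[OF TA.AA_comm t1(1)])
    fix m f assume mf: "m \<in> carrier M" "f \<in> lin_hom S M Q"
    have "tA (\<ominus>\<^bsub>M\<^esub> (a \<odot>\<^bsub>M\<^esub> m)) f = inv\<^bsub>A\<^esub> tA (a \<odot>\<^bsub>M\<^esub> m) f"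
      by (rule TA.tt_neg1[of "a \<odot>\<^bsub>M\<^esub> m" _ "\<zero>\<^bsub>M\<^esub>"]) (use mf a in \<open>simp_all add: smult_closed H_simps M.r_neg\<close>)
    then show "inv\<^bsub>A\<^esub> \<theta>1 (f m) = tA (\<ominus>\<^bsub>S\<^esub> a \<odot>\<^bsub>M\<^esub> m) f"
      using mf a t1(2) by (simp add: smult_neg)
  next
    fix q assume q: "q \<in> carrier Q"
    have c: "\<theta>1 q \<in> carrier A" using q t1(1) hom_in_carrier by fastforce
    show "eps (inv\<^bsub>A\<^esub> \<theta>1 q) = \<ominus>\<^bsub>S\<^esub> a \<odot>\<^bsub>Q\<^esub> q"
      using group_hom.hom_inv[OF eps_gh c] q a t1(3) Q.smult_neg[of a q] by (simp add: a_inv_def)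
  qed
qed

definition Smod :: "('s, 's) module" where
  "Smod = \<lparr>carrier = carrier S, monoid.mult = (\<otimes>\<^bsub>S\<^esub>), one = \<one>\<^bsub>S\<^esub>,
     ring.zero = \<zero>\<^bsub>S\<^esub>, ring.add = (\<oplus>\<^bsub>S\<^esub>), smult = (\<otimes>\<^bsub>S\<^esub>)\<rparr>"

lemma Smod_simps: "carrier Smod = carrier S" "(\<oplus>\<^bsub>Smod\<^esub>) = (\<oplus>\<^bsub>S\<^esub>)" "\<zero>\<^bsub>Smod\<^esub> = \<zero>\<^bsub>S\<^esub>"
  "s \<odot>\<^bsub>Smod\<^esub> x = s \<otimes>\<^bsub>S\<^esub> x"
  by (simp_all add: Smod_def)

lemma Smod_ag: "abelian_group Smod"
  by (rule abelian_groupI) (auto simp: Smod_simps S.a_ac S.l_neg intro: bexI[of _ "\<ominus>\<^bsub>S\<^esub> _"])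

lemma Smod_lm: "left_module S Smod"
  unfolding left_module_def module_axioms_def
  using Smod_ag by (simp add: Smod_simps S.ring_axioms S.l_distr S.r_distr S.m_assoc)

lemma Good_gen:
  assumes phi: "\<phi> \<in> lin_hom S M Smod" and n: "n \<in> carrier M"
  shows "Good (\<phi> n)"
proof -
  have phiS: "\<phi> x \<in> carrier S" if "x \<in> carrier M" for x using lin_homD(1)[OF phi that] by (simp add: Smod_simps)
  have phiadd: "\<phi> (x \<oplus>\<^bsub>M\<^esub> y) = \<phi> x \<oplus>\<^bsub>S\<^esub> \<phi> y" if "x \<in> carrier M" "y \<in> carrier M" for x y
    using lin_homD(3)[OF phi that] by (simp add: Smod_simps)
  have phism: "\<phi> (s \<odot>\<^bsub>M\<^esub> x) = s \<otimes>\<^bsub>S\<^esub> \<phi> x" if "s \<in> carrier S" "x \<in> carrier M" for s x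
    using lin_homD(4)[OF phi that] by (simp add: Smod_simps)
  define g where "g q = (\<lambda>x\<in>carrier M. \<phi> x \<odot>\<^bsub>Q\<^esub> q)" for q
  have gc: "g q \<in> lin_hom S M Q" if q: "q \<in> carrier Q" for q
    unfolding g_def
    by (rule lin_homI) (auto simp: phiS phiadd phism q Q.smult_closed Q.smult_l_distr Q.smult_assoc1 smult_closed)
  define \<theta> where "\<theta> q = tA n (g q)" for q
  show ?thesis unfolding Good_def
  proof (intro exI conjI ballI)
    show "\<theta> \<in> hom (add_monoid Q) A"
    proof (rule homI)
      fix q assume "q \<in> carrier (add_monoid Q)"
      then show "\<theta> q \<in> carrier A" unfolding \<theta>_def using n gc by (intro TA.tt_closed) (simp_all add: H_simps)
    next
      fix q q' assume qq: "q \<in> carrier (add_monoid Q)" "q' \<in> carrier (add_monoid Q)"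
      have "g (q \<otimes>\<^bsub>add_monoid Q\<^esub> q') = g q \<oplus>\<^bsub>H\<^esub> g q'"
        using qq by (auto simp: g_def H_simps Q.smult_r_distr phiS intro!: restrict_ext)
      moreover have c: "n \<in> carrier M" "g q \<in> carrier H" "g q' \<in> carrier H" using n gc qq by (simp_all add: H_simps)
      ultimately show "\<theta> (q \<otimes>\<^bsub>add_monoid Q\<^esub> q') = \<theta> q \<otimes>\<^bsub>A\<^esub> \<theta> q'"
        unfolding \<theta>_def using TA.tt_add2[OF c] by simp
    qed
  next
    fix m f assume mf: "m \<in> carrier M" "f \<in> lin_hom S M Q"
    define \<psi> where "\<psi> = (\<lambda>x\<in>carrier M. \<phi> x \<odot>\<^bsub>M\<^esub> m)"
    have psi: "\<psi> \<in> carrier E" unfolding \<psi>_def E_carrier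
      by (rule lin_homI) (auto simp: phiS phiadd phism mf smult_closed smult_l_distr smult_assoc1)
    have "tA (\<psi> n) f = tA n (act \<psi> f)" by (rule bal_E[OF n psi mf(2)])
    moreover have "\<psi> n = \<phi> n \<odot>\<^bsub>M\<^esub> m" using n by (simp add: \<psi>_def)
    moreover have "act \<psi> f = g (f m)"
      using mf by (auto simp: act_def \<psi>_def g_def phiS lin_homD intro!: restrict_ext)
    ultimately show "\<theta> (f m) = tA (\<phi> n \<odot>\<^bsub>M\<^esub> m) f" by (simp add: \<theta>_def)
  next
    fix q assume q: "q \<in> carrier Q"
    show "eps (\<theta> q) = \<phi> n \<odot>\<^bsub>Q\<^esub> q"
      unfolding \<theta>_def using eps_tA[OF n gc[OF q]] n by (simp add: g_def)
  qed
qed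

lemma Smod_inv: "h \<in> carrier S \<Longrightarrow> inv\<^bsub>add_monoid Smod\<^esub> h = \<ominus>\<^bsub>S\<^esub> h"
proof -
  assume h: "h \<in> carrier S"
  have "\<ominus>\<^bsub>Smod\<^esub> h = \<ominus>\<^bsub>S\<^esub> h"
    by (rule abelian_group.minus_equality[OF Smod_ag]) (simp_all add: Smod_simps h S.l_neg)
  then show ?thesis by (simp add: a_inv_def)
qed

lemma main_iso:
  assumes gen: "generator S M TYPE('s)"
  shows "\<exists>\<epsilon>. \<epsilon> \<in> iso A (add_monoid Q) \<and> (\<forall>m\<in>carrier M. \<forall>f\<in>lin_hom S M Q. \<epsilon> (tA m f) = f m)"
proof -
  define Xg where "Xg = \<Union> ((\<lambda>\<phi>. \<phi> ` carrier M) ` lin_hom S M Smod)"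
  have "\<forall>N :: ('s, 's) module. left_module S N \<longrightarrow> generates S M N" using gen by (simp add: generator_def)
  then have gs: "generates S M Smod" using Smod_lm by blast
  then have cS: "carrier S = generate (add_monoid Smod) Xg" unfolding generates_def Xg_def by (simp add: Smod_simps)
  have all: "s \<in> carrier S \<and> Good s" if "s \<in> generate (add_monoid Smod) Xg" for s
    using that
  proof (induction rule: generate.induct)
    case one
    then show ?case by (simp add: Smod_simps Good_zero)
  next
    case (incl h)
    then obtain \<phi> n where pn: "\<phi> \<in> lin_hom S M Smod" "n \<in> carrier M" "h = \<phi> n" unfolding Xg_def by blast
    then show ?case using Good_gen lin_homD(1)[OF pn(1) pn(2)] by (simp add: Smod_simps)
  next
    case (inv h)
    then obtain \<phi> n where pn: "\<phi> \<in> lin_hom S M Smod" "n \<in> carrier M" "h = \<phi> n" unfolding Xg_def by blast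
    then have hS: "h \<in> carrier S" using lin_homD(1)[OF pn(1) pn(2)] by (simp add: Smod_simps)
    have "Good h" using Good_gen pn by simp
    then show ?case using Good_neg hS Smod_inv by simp
  next
    case (eng h1 h2)
    then show ?case using Good_add by (simp add: Smod_simps)
  qed
  have "\<one>\<^bsub>S\<^esub> \<in> generate (add_monoid Smod) Xg" using cS S.one_closed by simp
  then have "Good \<one>\<^bsub>S\<^esub>" using all by simp
  then obtain \<theta> where t: "\<theta> \<in> hom (add_monoid Q) A"
      "\<forall>m\<in>carrier M. \<forall>f\<in>lin_hom S M Q. \<theta> (f m) = tA (\<one>\<^bsub>S\<^esub> \<odot>\<^bsub>M\<^esub> m) f"
      "\<forall>q\<in>carrier Q. eps (\<theta> q) = \<one>\<^bsub>S\<^esub> \<odot>\<^bsub>Q\<^esub> q" unfolding Good_def by blast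
  have t2: "\<theta> (f m) = tA m f" if "m \<in> carrier M" "f \<in> lin_hom S M Q" for m f
    using t(2) that by (simp add: smult_one)
  have t3: "eps (\<theta> q) = q" if "q \<in> carrier Q" for q using t(3) that by (simp add: Q.smult_one)
  have comp: "(\<lambda>a. \<theta> (eps a)) \<in> hom A A" using hom_compose[OF eps_hom t(1)] by (simp add: comp_def)
  have idh: "(\<lambda>a. a) \<in> hom A A" by (rule homI) auto
  have left: "\<theta> (eps a) = a" if a: "a \<in> carrier A" for a
    by (rule TA.tt_hom_eq[OF AG.is_group comp idh _ a]) (simp add: eps_tA t2 H_simps)
  have "bij_betw eps (carrier A) (carrier (add_monoid Q))"
  proof (rule bij_betw_byWitness[of _ \<theta>])
    show "\<forall>a\<in>carrier A. \<theta> (eps a) = a" using left by blast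
    show "\<forall>a'\<in>carrier (add_monoid Q). eps (\<theta> a') = a'" using t3 by simp
    show "eps ` carrier A \<subseteq> carrier (add_monoid Q)" using hom_in_carrier[OF eps_hom] by auto
    show "\<theta> ` carrier (add_monoid Q) \<subseteq> carrier A" using hom_in_carrier[OF t(1)] by auto
  qed
  then have "eps \<in> iso A (add_monoid Q)" using eps_hom by (simp add: iso_def)
  then show ?thesis by (intro exI[of _ eps] conjI) (simp_all add: eps_tA)
qed

end

theorem proposition3p11:
  fixes R :: "'r ring" and S :: "'s ring"
    and M :: "('s, 'm) module" and ract :: "'m \<Rightarrow> 'r \<Rightarrow> 'm"
    and Q :: "('s, 'q) module"
  assumes "ring R" and "ring S"
    and "bimodule S R M ract"
    and "generator S M TYPE('s)"
    and "ring_epi R (End_ring S M) (chi M ract) TYPE((('m \<Rightarrow> 'm) \<times> nat) set)"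
    and "left_module S Q"
  shows "\<exists>\<epsilon>. \<epsilon> \<in> iso (tensor_group R M ract (Hom_module R S M ract Q)) (add_monoid Q) \<and>
           (\<forall>m\<in>carrier M. \<forall>f\<in>lin_hom S M Q.
              \<epsilon> (tens R M ract (Hom_module R S M ract Q) m f) = f m)"
proof -
  have lmM: "left_module S M" using assms(3) by (simp add: bimodule_def)
  have chih: "chi M ract \<in> ring_hom R (End_ring S M)" using assms(5) by (simp add: ring_epi_def)
  have d: "dctx S M R ract"
    by (rule dctx.intro[OF lm.intro[OF lmM] dctx_axioms.intro[OF assms(1) assms(3) chih]])
  have f: "fctx S M R ract Q"
    by (rule fctx.intro[OF d lm.intro[OF assms(6)] fctx_axioms.intro[OF assms(5)]])
  then interpret F: fctx S M R ract Q .
  show ?thesis using F.main_iso[OF assms(4)] .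
qed


end
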